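(* If $G$ is a finite directed acyclic graph, then $\mathrm{DT}(G)$ is homotopy equivalent to a wedge of $\prod_{v\in V(G)\setminus R}(d^-(v)-1)$ spheres of dimension $\#V(G)-\#R-1$, where $R$ is the set of vertices of $G$ without edges directed to them.
   Context: A directed acyclic graph has no directed cycles. A directed forest is a set of edges which, as a graph, is acyclic with at most one edge directed to each vertex. $\mathrm{DT}(G)$ is the simplicial complex with vertex set $E(G)$ whose simplices are the directed forests. $d^-(v)$ denotes the number of edges of $G$ directed to $v$. A wedge of zero spheres means a point (contractible). *)

theory Defs
  imports "HOL-Analysis.Analysis"
begin

definition edge_rel :: "('e \<Rightarrow> 'v) \<Rightarrow> ('e \<Rightarrow> 'v) \<Rightarrow> 'e set \<Rightarrow> ('v \<times> 'v) set" where
  "edge_rel src tgt F = {(src e, tgt e) | e. e \<in> F}"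

definition finite_dag :: "'v set \<Rightarrow> 'e set \<Rightarrow> ('e \<Rightarrow> 'v) \<Rightarrow> ('e \<Rightarrow> 'v) \<Rightarrow> bool" where
  "finite_dag V E src tgt \<longleftrightarrow> finite V \<and> finite E \<and>
     (\<forall>e\<in>E. src e \<in> V \<and> tgt e \<in> V) \<and> acyclic (edge_rel src tgt E)"

definition indeg :: "'e set \<Rightarrow> ('e \<Rightarrow> 'v) \<Rightarrow> 'v \<Rightarrow> nat" where
  "indeg E tgt v = card {e \<in> E. tgt e = v}"

definition directed_forest :: "'e set \<Rightarrow> ('e \<Rightarrow> 'v) \<Rightarrow> ('e \<Rightarrow> 'v) \<Rightarrow> 'e set \<Rightarrow> bool" where
  "directed_forest E src tgt F \<longleftrightarrow> F \<subseteq> E \<and> acyclic (edge_rel src tgt F) \<and>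
     (\<forall>v. card {e \<in> F. tgt e = v} \<le> 1)"

definition DT :: "'e set \<Rightarrow> ('e \<Rightarrow> 'v) \<Rightarrow> ('e \<Rightarrow> 'v) \<Rightarrow> 'e set set" where
  "DT E src tgt = {F. directed_forest E src tgt F}"

text \<open>Geometric realization of a finite abstract simplicial complex K on vertex set
  'e: barycentric coordinate functions whose support is a simplex, with the
  product (= Euclidean, as everything is finite) topology.\<close>
definition geom_realization :: "'e set set \<Rightarrow> ('e \<Rightarrow> real) topology" where
  "geom_realization K = subtopology (product_topology (\<lambda>_. euclideanreal) UNIV)
     {f. (\<forall>e. 0 \<le> f e) \<and> {e. f e \<noteq> 0} \<in> K \<and> finite {e. f e \<noteq> 0} \<and> sum f {e. f e \<noteq> 0} = 1}"

text \<open>Wedge of n spheres of dimension d (d \<ge> -1), modelled in nat \<Rightarrow> real: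
  the i-th sphere is the unit sphere in the coordinate block
  [i(d+1), (i+1)(d+1)) centred at the first basis vector of that block, so all
  spheres pass through the origin (the wedge point).  The wedge of zero spheres
  is a point.  For d = -1 the (-1)-sphere is empty: the wedge of n \<ge> 1 copies is
  empty, of 0 copies a point.\<close>
definition wedge_spheres_set :: "nat \<Rightarrow> int \<Rightarrow> (nat \<Rightarrow> real) set" where
  "wedge_spheres_set n d =
    (if d < 0 then (if n = 0 then {\<lambda>_. 0} else {})
     else insert (\<lambda>_. 0)
       {x. \<exists>i<n. let m = nat d + 1 in
            (\<forall>j. j \<notin> {i*m..<(i+1)*m} \<longrightarrow> x j = 0) \<and>
            (x (i*m) - 1)^2 + (\<Sum>j\<in>{i*m<..<(i+1)*m}. (x j)^2) = 1})"

definition wedge_spheres :: "nat \<Rightarrow> int \<Rightarrow> (nat \<Rightarrow> real) topology" where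
  "wedge_spheres n d = subtopology (product_topology (\<lambda>_. euclideanreal) UNIV) (wedge_spheres_set n d)"

end

theory Submission
  imports Defs
begin

definition cvec :: "'a topology \<Rightarrow> ('a \<Rightarrow> 'v \<Rightarrow> real) \<Rightarrow> bool" where
  "cvec T g \<longleftrightarrow> (\<forall>v. continuous_map T euclideanreal (\<lambda>x. g x v))"

lemma cont_Min_fin:
  assumes "finite A" "A \<noteq> {}" "\<And>a. a \<in> A \<Longrightarrow> continuous_map T euclideanreal (h a)"
  shows "continuous_map T euclideanreal (\<lambda>x. Min ((\<lambda>a. h a x) ` A))"
  using assms
proof (induction A rule: finite_ne_induct)
  case (singleton a)
  then show ?case by simp
next
  case (insert a F)
  have "(\<lambda>x. Min ((\<lambda>a. h a x) ` insert a F)) = (\<lambda>x. min (h a x) (Min ((\<lambda>a. h a x) ` F)))"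
    using insert by (auto simp: Min_insert)
  then show ?case using insert by (auto intro!: continuous_intros)
qed

locale sph =
  fixes U :: "'v set" and v0 :: 'v
  assumes finU: "finite U" and v0U: "v0 \<in> U"
begin

definition kk :: real where "kk = real (card U)"

lemma Une: "U \<noteq> {}" using v0U by auto

lemma kpos: "kk > 0" unfolding kk_def using finU Une by (simp add: card_gt_0_iff)
lemma kge1: "kk \<ge> 1"
proof -
  have "card U \<ge> 1" using finU Une by (simp add: Suc_le_eq card_gt_0_iff)
  then show ?thesis unfolding kk_def by simp
qed

definition l1 :: "('v \<Rightarrow> real) \<Rightarrow> real" where "l1 y = (\<Sum>v\<in>U. \<bar>y v\<bar>)"
definition sq :: "('v \<Rightarrow> real) \<Rightarrow> real" where "sq y = (\<Sum>v\<in>U. (y v)^2)"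
definition vsum :: "('v \<Rightarrow> real) \<Rightarrow> real" where "vsum y = (\<Sum>v\<in>U. y v)"
definition N1 :: "('v \<Rightarrow> real) \<Rightarrow> 'v \<Rightarrow> real" where "N1 y = restrict (\<lambda>v. y v / l1 y) U"
definition N2 :: "('v \<Rightarrow> real) \<Rightarrow> 'v \<Rightarrow> real" where "N2 y = restrict (\<lambda>v. y v / sqrt (sq y)) U"
definition mn :: "('v \<Rightarrow> real) \<Rightarrow> real" where "mn y = Min (y ` U)"
definition nu :: "('v \<Rightarrow> real) \<Rightarrow> real" where "nu y = vsum y / kk - mn y"
definition ell :: "('v \<Rightarrow> real) \<Rightarrow> real" where "ell s = max 0 (min 1 (2 * kk * mn s - 1))"
definition Lm :: "('v \<Rightarrow> real) \<Rightarrow> 'v \<Rightarrow> real" where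
  "Lm y = restrict (\<lambda>v. if v = v0 then vsum y else y v - y v0) U"
definition Li :: "('v \<Rightarrow> real) \<Rightarrow> 'v \<Rightarrow> real" where
  "Li y = restrict (\<lambda>v. (y v0 - (\<Sum>u\<in>U-{v0}. y u)) / kk + (if v = v0 then 0 else y v)) U"
definition S1 where "S1 = {s \<in> extensional U. l1 s = 1}"
definition S2 where "S2 = {z \<in> extensional U. sq z = 1}"
definition poleW :: "'v \<Rightarrow> real" where "poleW = restrict (\<lambda>v. if v = v0 then -1 else 0) U"
definition poleX :: "'v \<Rightarrow> real" where "poleX = restrict (\<lambda>v. -1/kk) U"
definition Phs :: "('v \<Rightarrow> real) \<Rightarrow> 'v \<Rightarrow> real" where
  "Phs s = N2 (Lm (restrict (\<lambda>v. ell s * s v - (1 - ell s)) U))"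
definition Pin :: "('v \<Rightarrow> real) \<Rightarrow> 'v \<Rightarrow> real" where
  "Pin z = restrict (\<lambda>v. Li z v + nu (Li z)) U"
definition Pss :: "('v \<Rightarrow> real) \<Rightarrow> 'v \<Rightarrow> real" where
  "Pss z = N1 (Pin z)"
definition KA where "KA t s = 1 - t + t * ell s"
definition KB where "KB t s = t * (ell s * nu s - (1 - ell s))"
definition Ks :: "real \<Rightarrow> ('v \<Rightarrow> real) \<Rightarrow> 'v \<Rightarrow> real" where
  "Ks t s = N1 (restrict (\<lambda>v. KA t s * s v + KB t s) U)"
definition GA where "GA t z = 1 - t + t * (ell (Pss z) / l1 (Pin z))"
definition GB where "GB t z = t * (ell (Pss z) * nu (Li z) / l1 (Pin z) - (1 - ell (Pss z)))"
definition Gs :: "real \<Rightarrow> ('v \<Rightarrow> real) \<Rightarrow> 'v \<Rightarrow> real" where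
  "Gs t z = N2 (Lm (restrict (\<lambda>v. GA t z * Li z v + GB t z) U))"

lemma mn_le: "v \<in> U \<Longrightarrow> mn y \<le> y v"
  unfolding mn_def using finU by auto

lemma mn_in: "\<exists>v\<in>U. mn y = y v"
proof -
  have "Min (y ` U) \<in> y ` U" using finU Une by (intro Min_in) auto
  then show ?thesis unfolding mn_def by auto
qed

lemma mn_cong: "(\<And>v. v \<in> U \<Longrightarrow> y v = y' v) \<Longrightarrow> mn y = mn y'"
proof -
  assume a: "\<And>v. v \<in> U \<Longrightarrow> y v = y' v"
  have "y ` U = y' ` U" using a by (auto simp: image_def)
  then show ?thesis unfolding mn_def by simp
qed

lemma vsum_cong: "(\<And>v. v \<in> U \<Longrightarrow> y v = y' v) \<Longrightarrow> vsum y = vsum y'"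
  unfolding vsum_def by simp

lemma nu_cong: "(\<And>v. v \<in> U \<Longrightarrow> y v = y' v) \<Longrightarrow> nu y = nu y'"
  unfolding nu_def using mn_cong[of y y'] vsum_cong[of y y'] by simp

lemma l1_cong: "(\<And>v. v \<in> U \<Longrightarrow> y v = y' v) \<Longrightarrow> l1 y = l1 y'"
  unfolding l1_def by simp

lemma sq_cong: "(\<And>v. v \<in> U \<Longrightarrow> y v = y' v) \<Longrightarrow> sq y = sq y'"
  unfolding sq_def by simp

lemma mn_affine:
  assumes "a \<ge> 0" shows "mn (\<lambda>v. a * y v + b) = a * mn y + b"
proof -
  have m: "mono (\<lambda>x. a * x + b)" using assms by (auto simp: mono_def mult_left_mono)
  have "(\<lambda>v. a * y v + b) ` U = (\<lambda>x. a * x + b) ` (y ` U)" by auto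
  then show ?thesis unfolding mn_def
    using mono_Min_commute[OF m, of "y ` U"] finU Une by simp
qed

lemma vsum_affine: "vsum (\<lambda>v. a * y v + b) = a * vsum y + kk * b"
  unfolding vsum_def kk_def by (simp add: sum.distrib sum_distrib_left)

lemma nu_affine:
  assumes "a \<ge> 0" shows "nu (\<lambda>v. a * y v + b) = a * nu y"
  unfolding nu_def using mn_affine[OF assms] vsum_affine kpos
  by (simp add: field_simps)

lemma nu_ge0: "nu y \<ge> 0"
proof -
  have "(\<Sum>v\<in>U. mn y) \<le> (\<Sum>v\<in>U. y v)" by (rule sum_mono) (simp add: mn_le)
  then have "kk * mn y \<le> vsum y" by (simp add: vsum_def kk_def)
  then show ?thesis unfolding nu_def using kpos by (simp add: field_simps)
qed

lemma nu_zero: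
  assumes "nu y = 0" "v \<in> U" shows "y v = mn y"
proof -
  have "vsum y = kk * mn y" using assms kpos unfolding nu_def by (simp add: field_simps)
  then have "(\<Sum>u\<in>U. y u - mn y) = 0" by (simp add: vsum_def kk_def sum_subtractf)
  moreover have "\<forall>u\<in>U. 0 \<le> y u - mn y" using mn_le by auto
  ultimately have "\<forall>u\<in>U. y u - mn y = 0"
    using sum_nonneg_eq_0_iff[OF finU, of "\<lambda>u. y u - mn y"] by simp
  then show ?thesis using assms by auto
qed

lemma const_mn: "(\<And>v. v \<in> U \<Longrightarrow> y v = c) \<Longrightarrow> mn y = c"
proof -
  assume a: "\<And>v. v \<in> U \<Longrightarrow> y v = c"
  obtain v where "v \<in> U" "mn y = y v" using mn_in by blast
  then show ?thesis using a by simp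
qed

lemma const_nu: "(\<And>v. v \<in> U \<Longrightarrow> y v = c) \<Longrightarrow> nu y = 0"
  using const_mn[of y c] kpos unfolding nu_def vsum_def kk_def by simp

lemma const_l1: "(\<And>v. v \<in> U \<Longrightarrow> y v = c) \<Longrightarrow> l1 y = kk * \<bar>c\<bar>"
  unfolding l1_def kk_def by simp

lemma ell_range: "0 \<le> ell s" "ell s \<le> 1"
  unfolding ell_def by auto

lemma ell_pos: assumes "ell s > 0" "v \<in> U" shows "s v > 1 / (2 * kk)"
proof -
  have "2 * kk * mn s - 1 > 0" using assms(1) unfolding ell_def by linarith
  then have "mn s > 1 / (2 * kk)" using kpos by (simp add: field_simps)
  then show ?thesis using mn_le[OF assms(2), of s] by linarith
qed

lemma l1_ge0: "l1 y \<ge> 0" unfolding l1_def by (simp add: sum_nonneg)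
lemma sq_ge0: "sq y \<ge> 0" unfolding sq_def by (simp add: sum_nonneg)

lemma l1_zero: assumes "l1 y = 0" "v \<in> U" shows "y v = 0"
proof -
  have "\<forall>u\<in>U. \<bar>y u\<bar> = 0"
    using sum_nonneg_eq_0_iff[OF finU, of "\<lambda>u. \<bar>y u\<bar>"] assms(1) unfolding l1_def by simp
  then show ?thesis using assms(2) by simp
qed

lemma sq_zero: assumes "sq y = 0" "v \<in> U" shows "y v = 0"
proof -
  have "\<forall>u\<in>U. (y u)^2 = 0"
    using sum_nonneg_eq_0_iff[OF finU, of "\<lambda>u. (y u)^2"] assms(1) unfolding sq_def by simp
  then show ?thesis using assms(2) by simp
qed

lemma l1_pos: assumes "v \<in> U" "y v \<noteq> 0" shows "l1 y > 0"
proof -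
  have "l1 y \<noteq> 0" using l1_zero assms by blast
  then show ?thesis using l1_ge0[of y] by linarith
qed

lemma sq_pos: assumes "v \<in> U" "y v \<noteq> 0" shows "sq y > 0"
proof -
  have "sq y \<noteq> 0" using sq_zero assms by blast
  then show ?thesis using sq_ge0[of y] by linarith
qed

lemma N1_S1: assumes "l1 y > 0" shows "N1 y \<in> S1"
proof -
  have "l1 (N1 y) = (\<Sum>v\<in>U. \<bar>N1 y v\<bar>)" by (simp add: l1_def)
  also have "\<dots> = (\<Sum>v\<in>U. \<bar>y v\<bar> / l1 y)"
    using assms by (intro sum.cong) (simp_all add: abs_div N1_def)
  also have "\<dots> = l1 y / l1 y" by (simp add: sum_divide_distrib[symmetric] l1_def)
  finally show ?thesis using assms unfolding S1_def N1_def by simp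
qed

lemma N2_S2: assumes "sq y > 0" shows "N2 y \<in> S2"
proof -
  have "sq (N2 y) = (\<Sum>v\<in>U. (N2 y v)^2)" by (simp add: sq_def)
  also have "\<dots> = (\<Sum>v\<in>U. (y v)^2 / sq y)"
    using assms by (intro sum.cong) (simp_all add: power_divide N2_def)
  also have "\<dots> = sq y / sq y" by (simp add: sum_divide_distrib[symmetric] sq_def)
  finally show ?thesis using assms unfolding S2_def N2_def by simp
qed

lemma N1_id: assumes "s \<in> S1" shows "N1 s = s"
proof -
  have "N1 s = restrict s U" unfolding N1_def using assms unfolding S1_def by simp
  then show ?thesis using assms unfolding S1_def by (simp add: extensional_restrict)
qed

lemma N2_id: assumes "z \<in> S2" shows "N2 z = z"
proof -
  have "N2 z = restrict z U" unfolding N2_def using assms unfolding S2_def by simp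
  then show ?thesis using assms unfolding S2_def by (simp add: extensional_restrict)
qed

lemma N1_scale: assumes c: "c > 0" shows "N1 (restrict (\<lambda>v. y v / c) U) = N1 y"
proof -
  have "l1 (restrict (\<lambda>v. y v / c) U) = (\<Sum>v\<in>U. \<bar>restrict (\<lambda>v. y v / c) U v\<bar>)" by (simp add: l1_def)
  also have "\<dots> = (\<Sum>v\<in>U. \<bar>y v\<bar> / c)"
    using c by (intro sum.cong) (simp_all add: abs_div)
  also have "\<dots> = l1 y / c" by (simp add: sum_divide_distrib[symmetric] l1_def)
  finally have l: "l1 (restrict (\<lambda>v. y v / c) U) = l1 y / c" .
  show ?thesis
  proof
    fix v show "N1 (restrict (\<lambda>v. y v / c) U) v = N1 y v"
      unfolding N1_def l using c by (cases "v \<in> U") simp_all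
  qed
qed

lemma N1_cong: assumes "\<And>v. v \<in> U \<Longrightarrow> y v = y' v" shows "N1 y = N1 y'"
proof
  fix v show "N1 y v = N1 y' v"
    unfolding N1_def using assms l1_cong[of y y', OF assms] by (cases "v \<in> U") simp_all
qed

lemma N2_cong: assumes "\<And>v. v \<in> U \<Longrightarrow> y v = y' v" shows "N2 y = N2 y'"
proof
  fix v show "N2 y v = N2 y' v"
    unfolding N2_def using assms sq_cong[of y y', OF assms] by (cases "v \<in> U") simp_all
qed

lemma Li_cong: assumes "\<And>v. v \<in> U \<Longrightarrow> y v = y' v" shows "Li y = Li y'"
proof
  have s: "(\<Sum>u\<in>U-{v0}. y u) = (\<Sum>u\<in>U-{v0}. y' u)" using assms by (intro sum.cong) auto
  fix v show "Li y v = Li y' v"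
    unfolding Li_def using assms v0U s by (cases "v \<in> U") simp_all
qed

lemma Lm_cong: assumes "\<And>v. v \<in> U \<Longrightarrow> y v = y' v" shows "Lm y = Lm y'"
proof
  fix v show "Lm y v = Lm y' v"
    unfolding Lm_def using assms v0U vsum_cong[of y y', OF assms] by (cases "v \<in> U") simp_all
qed

lemma sum_U_v0: "(\<Sum>u\<in>U. y u) = y v0 + (\<Sum>u\<in>U-{v0}. y u)"
  using finU v0U by (simp add: sum.remove)

lemma card_U_v0: "real (card (U - {v0})) = kk - 1"
proof -
  have "card U \<ge> 1" using finU Une by (simp add: Suc_le_eq card_gt_0_iff)
  then show ?thesis unfolding kk_def using finU v0U by (simp add: of_nat_diff)
qed

lemma Li_Lm: "v \<in> U \<Longrightarrow> Li (Lm y) v = y v"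
proof -
  assume v: "v \<in> U"
  have s: "(\<Sum>u\<in>U-{v0}. Lm y u) = (\<Sum>u\<in>U-{v0}. y u - y v0)"
    unfolding Lm_def by (rule sum.cong) auto
  have s2: "(\<Sum>u\<in>U-{v0}. y u - y v0) = (\<Sum>u\<in>U-{v0}. y u) - (kk - 1) * y v0"
    by (simp add: sum_subtractf card_U_v0)
  have "Lm y v0 = vsum y" unfolding Lm_def using v0U by simp
  then have "(Lm y v0 - (\<Sum>u\<in>U-{v0}. Lm y u)) / kk = y v0"
    using s s2 kpos sum_U_v0[of y] unfolding vsum_def by (simp add: field_simps)
  then show ?thesis using v unfolding Li_def[of "Lm y"] by (simp add: Lm_def)
qed

lemma Lm_Li: "v \<in> U \<Longrightarrow> Lm (Li y) v = y v"
proof -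
  assume v: "v \<in> U"
  define c where "c = (y v0 - (\<Sum>u\<in>U-{v0}. y u)) / kk"
  have Liv: "\<And>u. u \<in> U \<Longrightarrow> Li y u = c + (if u = v0 then 0 else y u)"
    unfolding Li_def c_def by simp
  have "vsum (Li y) = (\<Sum>u\<in>U. c + (if u = v0 then 0 else y u))"
    unfolding vsum_def by (rule sum.cong) (auto simp: Liv)
  also have "\<dots> = kk * c + (\<Sum>u\<in>U. if u = v0 then 0 else y u)"
    by (simp add: sum.distrib kk_def)
  also have "(\<Sum>u\<in>U. if u = v0 then 0 else y u) = (\<Sum>u\<in>U-{v0}. y u)"
  proof -
    have "(\<Sum>u\<in>U-{v0}. if u = v0 then 0 else y u) = (\<Sum>u\<in>U-{v0}. y u)"
      by (intro sum.cong) auto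
    then show ?thesis using sum_U_v0[of "\<lambda>u. if u = v0 then 0 else y u"] by simp
  qed
  finally have "vsum (Li y) = y v0" unfolding c_def using kpos by simp
  then show ?thesis using v Liv v0U unfolding Lm_def by auto
qed

lemma Lm_ext: "Lm y \<in> extensional U" unfolding Lm_def by simp
lemma Li_ext: "Li y \<in> extensional U" unfolding Li_def by simp

lemma Li_scale: assumes "c \<noteq> 0" "v \<in> U" shows "Li (restrict (\<lambda>v. y v / c) U) v = Li y v / c"
proof -
  have s: "(\<Sum>u\<in>U-{v0}. restrict (\<lambda>v. y v / c) U u) = (\<Sum>u\<in>U-{v0}. y u) / c"
    by (simp add: sum_divide_distrib)
  show ?thesis unfolding Li_def using assms v0U s by (simp add: diff_divide_distrib add_divide_distrib mult.commute)
qed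

lemma Lm_nz: assumes "v \<in> U" "y v \<noteq> 0" shows "sq (Lm y) > 0"
proof (rule ccontr)
  assume "\<not> sq (Lm y) > 0"
  then have "sq (Lm y) = 0" using sq_ge0[of "Lm y"] by linarith
  then have "\<And>u. u \<in> U \<Longrightarrow> Lm y u = 0" using sq_zero by blast
  then have "Li (Lm y) = Li (\<lambda>_. 0)" by (rule Li_cong)
  then have "y v = Li (\<lambda>_. 0) v" using Li_Lm assms(1) by metis
  also have "\<dots> = 0" unfolding Li_def using assms by simp
  finally show False using assms by simp
qed

lemma Li_nz: assumes "z \<in> S2" shows "\<exists>v\<in>U. Li z v \<noteq> 0"
proof (rule ccontr)
  assume "\<not> ?thesis"
  then have "\<And>v. v \<in> U \<Longrightarrow> Li z v = (\<lambda>_. 0) v" by simp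
  then have "Lm (Li z) = Lm (\<lambda>_. 0)" by (rule Lm_cong)
  then have "\<And>v. v \<in> U \<Longrightarrow> z v = Lm (\<lambda>_. 0) v" using Lm_Li by metis
  then have "\<And>v. v \<in> U \<Longrightarrow> z v = 0" unfolding Lm_def vsum_def by simp
  then have "sq z = 0" unfolding sq_def by simp
  then show False using assms unfolding S2_def by simp
qed

end

context sph begin

lemma S1_const: assumes "s \<in> S1" "\<And>v. v \<in> U \<Longrightarrow> s v = c" shows "c = 1/kk \<or> c = -1/kk"
proof -
  have "kk * \<bar>c\<bar> = 1" using const_l1[of s c] assms unfolding S1_def by simp
  then have "\<bar>c\<bar> = 1/kk" using kpos by (simp add: field_simps)
  then show ?thesis by (cases "c \<ge> 0") simp_all
qed

lemma ell_const_pos: assumes "\<And>v. v \<in> U \<Longrightarrow> s v = 1/kk" shows "ell s = 1"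
proof -
  have "mn s = 1/kk" using const_mn assms by blast
  then show ?thesis unfolding ell_def using kpos by simp
qed

lemma ell_const_neg: assumes "\<And>v. v \<in> U \<Longrightarrow> s v = -1/kk" shows "ell s = 0"
proof -
  have "mn s = -1/kk" using const_mn assms by blast
  then show ?thesis unfolding ell_def using kpos by simp
qed

lemma KA_ge0: assumes "0 \<le> t" "t \<le> 1" shows "KA t s \<ge> 0"
  unfolding KA_def using assms ell_range[of s] by simp

lemma KA_zero: assumes "0 \<le> t" "t \<le> 1" "KA t s = 0" shows "t = 1" "ell s = 0"
proof -
  have "t * ell s \<ge> 0" using assms ell_range[of s] by simp
  then show "t = 1" using assms unfolding KA_def by linarith
  then show "ell s = 0" using assms unfolding KA_def by simp
qed

lemma Ks_nz: assumes s: "s \<in> S1" and t: "0 \<le> t" "t \<le> 1"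
  shows "l1 (restrict (\<lambda>v. KA t s * s v + KB t s) U) > 0"
proof (rule ccontr)
  assume "\<not> ?thesis"
  then have z: "\<And>v. v \<in> U \<Longrightarrow> KA t s * s v + KB t s = 0"
    using l1_pos[of _ "restrict (\<lambda>v. KA t s * s v + KB t s) U"] by fastforce
  show False
  proof (cases "KA t s = 0")
    case True
    then have "t = 1" "ell s = 0" using KA_zero t by auto
    then have "KB t s = -1" unfolding KB_def by simp
    then show False using z[OF v0U] True by simp
  next
    case False
    define c where "c = - KB t s / KA t s"
    have sc: "\<And>v. v \<in> U \<Longrightarrow> s v = c"
      using z False unfolding c_def by (simp add: field_simps) (metis add.commute add_eq_0_iff mult.commute)
    have nu0: "nu s = 0" using const_nu sc by blast
    consider "c = 1/kk" | "c = -1/kk" using S1_const[OF s sc] by blast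
    then show False
    proof cases
      case 1
      then have "ell s = 1" using ell_const_pos sc by simp
      then have "KA t s = 1" "KB t s = 0" unfolding KA_def KB_def using nu0 by simp_all
      then show False using z[OF v0U] sc[OF v0U] 1 kpos by simp
    next
      case 2
      then have "ell s = 0" using ell_const_neg sc by simp
      then have "KA t s = 1 - t" "KB t s = - t" unfolding KA_def KB_def by simp_all
      then have "(1 - t) * (1/kk) + t = 0" using z[OF v0U] sc[OF v0U] 2 by simp
      moreover have "(1 - t) * (1/kk) \<ge> 0" using t kpos by simp
      ultimately have "t = 0" "(1 - t) * (1/kk) = 0" using t by linarith+
      then show False using kpos by simp
    qed
  qed
qed

lemma Ks_S1: "s \<in> S1 \<Longrightarrow> 0 \<le> t \<Longrightarrow> t \<le> 1 \<Longrightarrow> Ks t s \<in> S1"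
  unfolding Ks_def using Ks_nz N1_S1 by blast

lemma Ks_0: assumes "s \<in> S1" shows "Ks 0 s = s"
proof -
  have "restrict (\<lambda>v. KA 0 s * s v + KB 0 s) U = restrict s U" unfolding KA_def KB_def by simp
  also have "\<dots> = s" using assms unfolding S1_def by (simp add: extensional_restrict)
  finally show ?thesis unfolding Ks_def using N1_id assms by simp
qed

lemma Phs_nz: assumes s: "s \<in> S1" shows "\<exists>v\<in>U. ell s * s v - (1 - ell s) \<noteq> 0"
proof (rule ccontr)
  assume "\<not> ?thesis"
  then have z: "\<And>v. v \<in> U \<Longrightarrow> ell s * s v - (1 - ell s) = 0" by blast
  show False
  proof (cases "ell s = 0")
    case True
    then show False using z[OF v0U] by simp
  next
    case False
    then have ep: "ell s > 0" using ell_range[of s] by linarith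
    define c where "c = (1 - ell s) / ell s"
    have sc: "\<And>v. v \<in> U \<Longrightarrow> s v = c" using z False unfolding c_def by (simp add: field_simps)
    have c0: "c \<ge> 0" unfolding c_def using ep ell_range[of s] by simp
    have "c = 1/kk" using S1_const[OF s sc] c0 kpos
      by (metis divide_minus_left neg_0_le_iff_le not_less zero_less_divide_1_iff)
    then have "ell s = 1" using ell_const_pos sc by simp
    then have "c = 0" unfolding c_def by simp
    then show False using \<open>c = 1/kk\<close> kpos by simp
  qed
qed

lemma Phs_S2: assumes "s \<in> S1" shows "Phs s \<in> S2"
proof -
  obtain v where v: "v \<in> U" "ell s * s v - (1 - ell s) \<noteq> 0" using Phs_nz[OF assms] by blast
  have "sq (Lm (restrict (\<lambda>v. ell s * s v - (1 - ell s)) U)) > 0"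
    by (rule Lm_nz[of v]) (use v in simp_all)
  then show ?thesis unfolding Phs_def by (rule N2_S2)
qed

lemma Lm_neg_const: assumes "d < 0" shows "N2 (Lm (restrict (\<lambda>v. d) U)) = poleW"
proof -
  define y where "y = restrict (\<lambda>v. d) U"
  have yv: "\<And>v. v \<in> U \<Longrightarrow> y v = d" unfolding y_def by simp
  have vs: "vsum y = kk * d" unfolding vsum_def kk_def using yv by simp
  have L: "\<And>v. v \<in> U \<Longrightarrow> Lm y v = (if v = v0 then kk * d else 0)"
    unfolding Lm_def using vs v0U yv by simp
  have "sq (Lm y) = (Lm y v0)^2 + (\<Sum>u\<in>U-{v0}. (Lm y u)^2)"
    unfolding sq_def by (rule sum_U_v0)
  also have "(\<Sum>u\<in>U-{v0}. (Lm y u)^2) = 0" by (intro sum.neutral) (simp add: L)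
  also have "Lm y v0 = kk * d" using L[OF v0U] by simp
  finally have "sq (Lm y) = (kk * d)^2" by simp
  moreover have "kk * d < 0" using assms kpos by (simp add: mult_pos_neg)
  ultimately have sq: "sqrt (sq (Lm y)) = - (kk * d)" by simp
  have "N2 (Lm y) = poleW"
  proof
    fix v show "N2 (Lm y) v = poleW v"
      unfolding N2_def poleW_def sq using L assms kpos by (cases "v \<in> U") simp_all
  qed
  then show ?thesis unfolding y_def .
qed

lemma Phs_ell0: "ell s = 0 \<Longrightarrow> Phs s = poleW"
  unfolding Phs_def using Lm_neg_const[of "-1"] by simp

lemma Pin_nz: assumes z: "z \<in> S2" shows "l1 (Pin z) > 0"
proof (rule ccontr)
  assume "\<not> ?thesis"
  then have "\<And>v. v \<in> U \<Longrightarrow> Pin z v = 0" using l1_pos by fastforce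
  then have c: "\<And>v. v \<in> U \<Longrightarrow> Li z v = - nu (Li z)" unfolding Pin_def by (simp add: eq_neg_iff_add_eq_0)
  then have "nu (Li z) = 0" using const_nu by blast
  then have "\<And>v. v \<in> U \<Longrightarrow> Li z v = 0" using c by simp
  then show False using Li_nz[OF z] by blast
qed

lemma Pss_S1: "z \<in> S2 \<Longrightarrow> Pss z \<in> S1"
  unfolding Pss_def using Pin_nz N1_S1 by blast

lemma Li_pole: "Li poleW = poleX"
proof
  have s: "(\<Sum>u\<in>U-{v0}. poleW u) = 0" by (intro sum.neutral) (simp add: poleW_def)
  fix v show "Li poleW v = poleX v"
    unfolding Li_def poleX_def using s v0U by (cases "v \<in> U") (simp_all add: poleW_def)
qed

lemma poleX_S1: "poleX \<in> S1"
proof -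
  have "l1 poleX = kk * \<bar>-1/kk\<bar>" by (rule const_l1) (simp add: poleX_def)
  then show ?thesis unfolding S1_def poleX_def using kpos by simp
qed

lemma Pss_pole: "Pss poleW = poleX"
proof -
  have nu0: "nu poleX = 0" by (rule const_nu[of _ "-1/kk"]) (simp add: poleX_def)
  have "Pin poleW = poleX" unfolding Pin_def Li_pole nu0 unfolding poleX_def by (intro restrict_ext) simp
  then show ?thesis unfolding Pss_def using N1_id poleX_S1 by simp
qed

lemma ell_poleX: "ell poleX = 0"
  by (rule ell_const_neg) (simp add: poleX_def)

lemma Ks_1: assumes s: "s \<in> S1" shows "Ks 1 s = Pss (Phs s)"
proof -
  define w where "w = restrict (\<lambda>v. ell s * s v - (1 - ell s)) U"
  define c where "c = sqrt (sq (Lm w))"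
  obtain v1 where v1: "v1 \<in> U" "ell s * s v1 - (1 - ell s) \<noteq> 0" using Phs_nz[OF s] by blast
  have "sq (Lm w) > 0" unfolding w_def by (rule Lm_nz[of v1]) (use v1 in simp_all)
  then have c: "c > 0" unfolding c_def by simp
  have P: "Phs s = restrict (\<lambda>v. Lm w v / c) U" unfolding Phs_def N2_def w_def c_def ..
  have LiP: "Li (Phs s) v = (ell s / c) * s v + (- (1 - ell s) / c)" if v: "v \<in> U" for v
  proof -
    have "Li (Phs s) v = Li (Lm w) v / c" unfolding P by (rule Li_scale) (use c v in auto)
    also have "\<dots> = w v / c" using Li_Lm v by simp
    also have "\<dots> = (ell s / c) * s v + (- (1 - ell s) / c)" unfolding w_def using v c
      by (simp add: field_simps)
    finally show ?thesis .
  qed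
  have "nu (Li (Phs s)) = nu (\<lambda>v. (ell s / c) * s v + (- (1 - ell s) / c))"
    using LiP by (rule nu_cong)
  also have "\<dots> = (ell s / c) * nu s" using c ell_range[of s] by (intro nu_affine) simp
  finally have nuP: "nu (Li (Phs s)) = (ell s / c) * nu s" .
  define Y where "Y = restrict (\<lambda>v. KA 1 s * s v + KB 1 s) U"
  have "Pin (Phs s) = restrict (\<lambda>v. Y v / c) U"
  proof
    fix v show "Pin (Phs s) v = restrict (\<lambda>v. Y v / c) U v"
    proof (cases "v \<in> U")
      case True
      have "Pin (Phs s) v = (ell s / c) * s v + (- (1 - ell s) / c) + (ell s / c) * nu s"
        unfolding Pin_def nuP using True LiP by simp
      also have "\<dots> = (KA 1 s * s v + KB 1 s) / c" unfolding KA_def KB_def using c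
        by (simp add: field_simps)
      finally show ?thesis using True by (simp add: Y_def)
    qed (simp add: Pin_def)
  qed
  then have "Pss (Phs s) = N1 Y" unfolding Pss_def using N1_scale[OF c] by simp
  then show ?thesis unfolding Ks_def Y_def by simp
qed

lemma GA_ge0: assumes "z \<in> S2" "0 \<le> t" "t \<le> 1" shows "GA t z \<ge> 0"
proof -
  have "ell (Pss z) / l1 (Pin z) \<ge> 0" using ell_range Pin_nz[OF assms(1)] by simp
  then have "t * (ell (Pss z) / l1 (Pin z)) \<ge> 0" using assms by (intro mult_nonneg_nonneg) simp_all
  then show ?thesis unfolding GA_def using assms by linarith
qed

lemma Gs_nz: assumes z: "z \<in> S2" and t: "0 \<le> t" "t \<le> 1"
  shows "\<exists>v\<in>U. GA t z * Li z v + GB t z \<noteq> 0"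
proof (rule ccontr)
  assume "\<not> ?thesis"
  then have zz: "\<And>v. v \<in> U \<Longrightarrow> GA t z * Li z v + GB t z = 0" by blast
  define n where "n = l1 (Pin z)"
  define e where "e = ell (Pss z)"
  have n: "n > 0" unfolding n_def using Pin_nz[OF z] .
  have e: "0 \<le> e" "e \<le> 1" unfolding e_def using ell_range by auto
  show False
  proof (cases "GA t z = 0")
    case True
    have "t * (e / n) \<ge> 0" using t e n by simp
    then have "t = 1" "t * (e / n) = 0" using True t unfolding GA_def e_def n_def by linarith+
    then have "e = 0" using n by simp
    then have "GB t z = -1" unfolding GB_def e_def[symmetric] n_def[symmetric] using \<open>t = 1\<close> by simp
    then show False using zz[OF v0U] True by simp
  next
    case False
    define c where "c = - GB t z / GA t z"
    have uc: "\<And>v. v \<in> U \<Longrightarrow> Li z v = c"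
      using zz False unfolding c_def by (simp add: field_simps) (metis add.commute add_eq_0_iff mult.commute)
    have c0: "c \<noteq> 0" using Li_nz[OF z] uc by auto
    have nu0: "nu (Li z) = 0" using const_nu uc by blast
    have Pinc: "\<And>v. v \<in> U \<Longrightarrow> Pin z v = c" unfolding Pin_def using uc nu0 by simp
    have nval: "n = kk * \<bar>c\<bar>" unfolding n_def by (rule const_l1) (rule Pinc)
    have Pssc: "\<And>v. v \<in> U \<Longrightarrow> Pss z v = c / (kk * \<bar>c\<bar>)"
      unfolding Pss_def N1_def using Pinc nval n_def by simp
    show False
    proof (cases "c > 0")
      case True
      have "\<And>v. v \<in> U \<Longrightarrow> Pss z v = 1/kk" using Pssc True by simp
      then have "e = 1" unfolding e_def by (rule ell_const_pos)
      then have "GB t z = 0" unfolding GB_def e_def[symmetric] n_def[symmetric] using nu0 by simp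
      then show False using zz[OF v0U] uc[OF v0U] False c0 by simp
    next
      case False
      then have cn: "c < 0" using c0 by simp
      have "\<And>v. v \<in> U \<Longrightarrow> Pss z v = -1/kk" using Pssc cn by simp
      then have "e = 0" unfolding e_def by (rule ell_const_neg)
      then have "GA t z = 1 - t" "GB t z = -t"
        unfolding GA_def GB_def e_def[symmetric] n_def[symmetric] by simp_all
      then have "(1 - t) * c - t = 0" using zz[OF v0U] uc[OF v0U] by simp
      moreover have "(1 - t) * c \<le> 0" using t cn by (simp add: mult_nonneg_nonpos)
      ultimately have "t = 0" using t by linarith
      then show False using \<open>(1 - t) * c - t = 0\<close> c0 by simp
    qed
  qed
qed

lemma Gs_S2: assumes "z \<in> S2" "0 \<le> t" "t \<le> 1" shows "Gs t z \<in> S2"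
proof -
  obtain v where v: "v \<in> U" "GA t z * Li z v + GB t z \<noteq> 0" using Gs_nz[OF assms] by blast
  have "sq (Lm (restrict (\<lambda>v. GA t z * Li z v + GB t z) U)) > 0"
    by (rule Lm_nz[of v]) (use v in simp_all)
  then show ?thesis unfolding Gs_def by (rule N2_S2)
qed

lemma Lm_Li_ext: assumes "z \<in> extensional U" shows "Lm (Li z) = z"
proof
  fix v show "Lm (Li z) v = z v"
    using Lm_Li[of v z] Lm_ext[of "Li z"] assms by (cases "v \<in> U") (simp_all add: extensional_def)
qed

lemma Gs_0: assumes "z \<in> S2" shows "Gs 0 z = z"
proof -
  have "restrict (\<lambda>v. GA 0 z * Li z v + GB 0 z) U = restrict (Li z) U" unfolding GA_def GB_def by simp
  also have "\<dots> = Li z" using Li_ext by (simp add: extensional_restrict)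
  finally show ?thesis unfolding Gs_def using Lm_Li_ext N2_id assms unfolding S2_def by simp
qed

lemma Gs_1: assumes "z \<in> S2" shows "Gs 1 z = Phs (Pss z)"
proof -
  define n where "n = l1 (Pin z)"
  have n: "n > 0" unfolding n_def using Pin_nz[OF assms] .
  have Pssv: "\<And>v. v \<in> U \<Longrightarrow> Pss z v = (Li z v + nu (Li z)) / n"
    unfolding Pss_def N1_def n_def Pin_def by simp
  have "restrict (\<lambda>v. GA 1 z * Li z v + GB 1 z) U = restrict (\<lambda>v. ell (Pss z) * Pss z v - (1 - ell (Pss z))) U"
  proof
    fix v show "restrict (\<lambda>v. GA 1 z * Li z v + GB 1 z) U v = restrict (\<lambda>v. ell (Pss z) * Pss z v - (1 - ell (Pss z))) U v"
      using n unfolding GA_def GB_def n_def[symmetric] by (cases "v \<in> U") (simp_all add: Pssv field_simps)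
  qed
  then show ?thesis unfolding Gs_def Phs_def by simp
qed

lemma Gs_pole: assumes "0 \<le> t" "t \<le> 1" shows "Gs t poleW = poleW"
proof -
  have e: "ell (Pss poleW) = 0" using Pss_pole ell_poleX by simp
  have "restrict (\<lambda>v. GA t poleW * Li poleW v + GB t poleW) U = restrict (\<lambda>v. - ((1 - t) / kk + t)) U"
    unfolding GA_def GB_def e Li_pole by (intro restrict_ext) (simp add: poleX_def field_simps)
  moreover have "- ((1 - t) / kk + t) < 0"
  proof (cases "t = 1")
    case False
    then have "(1 - t) / kk > 0" using assms kpos by simp
    then show ?thesis using assms by linarith
  qed simp
  ultimately show ?thesis unfolding Gs_def using Lm_neg_const by simp
qed

lemma KB_pos: "KB t s > 0 \<Longrightarrow> 0 \<le> t \<Longrightarrow> ell s > 0"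
  unfolding KB_def using ell_range[of s] by (cases "ell s = 0") auto

lemma Ks_pos: assumes "s \<in> S1" "0 \<le> t" "t \<le> 1" "v \<in> U"
  shows "Ks t s v > 0 \<longleftrightarrow> KA t s * s v + KB t s > 0"
  using Ks_nz[OF assms(1-3)] assms(4) unfolding Ks_def N1_def by (simp add: zero_less_divide_iff)

lemma Ks_neg: assumes "s \<in> S1" "0 \<le> t" "t \<le> 1" "v \<in> U"
  shows "Ks t s v < 0 \<longleftrightarrow> KA t s * s v + KB t s < 0"
  using Ks_nz[OF assms(1-3)] assms(4) unfolding Ks_def N1_def by (simp add: divide_less_0_iff)

end

context sph begin

lemma cvecD: "cvec T g \<Longrightarrow> continuous_map T euclideanreal (\<lambda>x. g x v)"
  unfolding cvec_def by blast

lemma cvec_restrict: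
  assumes "\<And>v. v \<in> U \<Longrightarrow> continuous_map T euclideanreal (\<lambda>x. h x v)"
  shows "cvec T (\<lambda>x. restrict (h x) U)"
  unfolding cvec_def
proof
  fix v show "continuous_map T euclideanreal (\<lambda>x. restrict (h x) U v)"
    using assms by (cases "v \<in> U") simp_all
qed

lemma cont_l1: "cvec T g \<Longrightarrow> continuous_map T euclideanreal (\<lambda>x. l1 (g x))"
  unfolding l1_def using finU by (intro continuous_intros) (simp_all add: cvecD)

lemma cont_sq: "cvec T g \<Longrightarrow> continuous_map T euclideanreal (\<lambda>x. sq (g x))"
  unfolding sq_def using finU by (intro continuous_intros) (simp_all add: cvecD)

lemma cont_vsum: "cvec T g \<Longrightarrow> continuous_map T euclideanreal (\<lambda>x. vsum (g x))"
  unfolding vsum_def using finU by (intro continuous_intros) (simp_all add: cvecD)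

lemma knz: "kk \<noteq> 0" using kpos by simp

lemma cont_mn: assumes "cvec T g" shows "continuous_map T euclideanreal (\<lambda>x. mn (g x))"
proof -
  have "continuous_map T euclideanreal (\<lambda>x. Min ((\<lambda>a. g x a) ` U))"
    by (rule cont_Min_fin[OF finU Une]) (rule cvecD[OF assms])
  then show ?thesis by (simp add: mn_def)
qed

lemma cont_nu: "cvec T g \<Longrightarrow> continuous_map T euclideanreal (\<lambda>x. nu (g x))"
  unfolding nu_def by (intro continuous_intros cont_vsum cont_mn) (simp_all add: knz)

lemma cont_ell: "cvec T g \<Longrightarrow> continuous_map T euclideanreal (\<lambda>x. ell (g x))"
  unfolding ell_def by (intro continuous_intros cont_mn) simp_all

lemma cvec_N1: assumes "cvec T g" "\<And>x. x \<in> topspace T \<Longrightarrow> l1 (g x) \<noteq> 0"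
  shows "cvec T (\<lambda>x. N1 (g x))"
  unfolding N1_def by (intro cvec_restrict continuous_intros cont_l1 assms cvecD[OF assms(1)])

lemma cvec_N2: assumes "cvec T g" "\<And>x. x \<in> topspace T \<Longrightarrow> sq (g x) > 0"
  shows "cvec T (\<lambda>x. N2 (g x))"
  unfolding N2_def
proof (intro cvec_restrict continuous_intros cont_sq assms cvecD[OF assms(1)])
  fix x assume "x \<in> topspace T" then have "sq (g x) > 0" using assms(2) by blast
  then show "sqrt (sq (g x)) \<noteq> 0" by simp
qed

lemma cvec_Lm: "cvec T g \<Longrightarrow> cvec T (\<lambda>x. Lm (g x))"
  unfolding Lm_def
proof (intro cvec_restrict)
  fix v assume "cvec T g" then show "continuous_map T euclideanreal (\<lambda>x. if v = v0 then vsum (g x) else g x v - g x v0)"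
    by (cases "v = v0") (simp_all add: cont_vsum cvecD continuous_map_diff)
qed

lemma cvec_Li: "cvec T g \<Longrightarrow> cvec T (\<lambda>x. Li (g x))"
  unfolding Li_def
proof (intro cvec_restrict)
  fix v assume g: "cvec T g"
  have c1: "continuous_map T euclideanreal (\<lambda>x. (g x v0 - (\<Sum>u\<in>U-{v0}. g x u)) / kk)"
    using finU kpos g by (intro continuous_intros) (simp_all add: cvecD)
  show "continuous_map T euclideanreal (\<lambda>x. (g x v0 - (\<Sum>u\<in>U-{v0}. g x u)) / kk + (if v = v0 then 0 else g x v))"
    using c1 g by (cases "v = v0") (simp_all add: cvecD continuous_map_add)
qed

lemma cvec_Phs: assumes g: "cvec T g" and S: "\<And>x. x \<in> topspace T \<Longrightarrow> g x \<in> S1"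
  shows "cvec T (\<lambda>x. Phs (g x))"
  unfolding Phs_def
proof (intro cvec_N2 cvec_Lm cvec_restrict)
  fix v show "continuous_map T euclideanreal (\<lambda>x. ell (g x) * g x v - (1 - ell (g x)))"
    using g by (intro continuous_intros cont_ell cvecD) simp_all
next
  fix x assume x: "x \<in> topspace T"
  obtain v where v: "v \<in> U" "ell (g x) * g x v - (1 - ell (g x)) \<noteq> 0" using Phs_nz[OF S[OF x]] by blast
  show "sq (Lm (restrict (\<lambda>v. ell (g x) * g x v - (1 - ell (g x))) U)) > 0"
    by (rule Lm_nz[of v]) (use v in simp_all)
qed

lemma cvec_Pin: "cvec T g \<Longrightarrow> cvec T (\<lambda>x. Pin (g x))"
  unfolding Pin_def
  by (intro cvec_restrict continuous_intros cont_nu cvec_Li cvecD[OF cvec_Li]) simp_all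

lemma cvec_Pss: assumes g: "cvec T g" and S: "\<And>x. x \<in> topspace T \<Longrightarrow> g x \<in> S2"
  shows "cvec T (\<lambda>x. Pss (g x))"
  unfolding Pss_def
proof (intro cvec_N1 cvec_Pin g)
  fix x assume "x \<in> topspace T" then show "l1 (Pin (g x)) \<noteq> 0" using Pin_nz[OF S] by fastforce
qed

lemma cont_KA: assumes "continuous_map T euclideanreal \<tau>" "cvec T g"
  shows "continuous_map T euclideanreal (\<lambda>x. KA (\<tau> x) (g x))"
  unfolding KA_def by (intro continuous_intros cont_ell assms)

lemma cont_KB: assumes "continuous_map T euclideanreal \<tau>" "cvec T g"
  shows "continuous_map T euclideanreal (\<lambda>x. KB (\<tau> x) (g x))"
  unfolding KB_def by (intro continuous_intros cont_ell cont_nu assms)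

lemma cvec_Ks: assumes t: "continuous_map T euclideanreal \<tau>" and g: "cvec T g"
  and S: "\<And>x. x \<in> topspace T \<Longrightarrow> g x \<in> S1 \<and> 0 \<le> \<tau> x \<and> \<tau> x \<le> 1"
  shows "cvec T (\<lambda>x. Ks (\<tau> x) (g x))"
  unfolding Ks_def
proof (intro cvec_N1 cvec_restrict)
  fix v show "continuous_map T euclideanreal (\<lambda>x. KA (\<tau> x) (g x) * g x v + KB (\<tau> x) (g x))"
    by (intro continuous_intros cont_KA cont_KB t g cvecD[OF g])
next
  fix x assume "x \<in> topspace T"
  then show "l1 (restrict (\<lambda>v. KA (\<tau> x) (g x) * g x v + KB (\<tau> x) (g x)) U) \<noteq> 0"
    using Ks_nz S by fastforce
qed

lemma cont_GA: assumes t: "continuous_map T euclideanreal \<tau>" and g: "cvec T g"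
  and S: "\<And>x. x \<in> topspace T \<Longrightarrow> g x \<in> S2"
  shows "continuous_map T euclideanreal (\<lambda>x. GA (\<tau> x) (g x))"
  unfolding GA_def
proof (intro continuous_intros cont_ell cvec_Pss cont_l1 cvec_Pin t g S)
  fix x assume "x \<in> topspace T" then show "l1 (Pin (g x)) \<noteq> 0" using Pin_nz[OF S] by fastforce
qed simp_all

lemma cont_GB: assumes t: "continuous_map T euclideanreal \<tau>" and g: "cvec T g"
  and S: "\<And>x. x \<in> topspace T \<Longrightarrow> g x \<in> S2"
  shows "continuous_map T euclideanreal (\<lambda>x. GB (\<tau> x) (g x))"
  unfolding GB_def
proof (intro continuous_intros cont_ell cvec_Pss cont_l1 cvec_Pin cont_nu cvec_Li t g S)
  fix x assume "x \<in> topspace T" then show "l1 (Pin (g x)) \<noteq> 0" using Pin_nz[OF S] by fastforce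
qed simp_all

lemma cvec_Gs: assumes t: "continuous_map T euclideanreal \<tau>" and g: "cvec T g"
  and S: "\<And>x. x \<in> topspace T \<Longrightarrow> g x \<in> S2 \<and> 0 \<le> \<tau> x \<and> \<tau> x \<le> 1"
  shows "cvec T (\<lambda>x. Gs (\<tau> x) (g x))"
  unfolding Gs_def
proof (intro cvec_N2 cvec_Lm cvec_restrict)
  fix v show "continuous_map T euclideanreal (\<lambda>x. GA (\<tau> x) (g x) * Li (g x) v + GB (\<tau> x) (g x))"
    using S by (intro continuous_intros cont_GA cont_GB t g cvecD[OF cvec_Li[OF g]]) simp_all
next
  fix x assume x: "x \<in> topspace T"
  obtain v where v: "v \<in> U" "GA (\<tau> x) (g x) * Li (g x) v + GB (\<tau> x) (g x) \<noteq> 0"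
    using Gs_nz S[OF x] by blast
  show "sq (Lm (restrict (\<lambda>v. GA (\<tau> x) (g x) * Li (g x) v + GB (\<tau> x) (g x)) U)) > 0"
    by (rule Lm_nz[of v]) (use v in simp_all)
qed

end


locale dts = sph U v0 for U :: "'v set" and v0 :: 'v +
  fixes E :: "'e set" and tgt :: "'e \<Rightarrow> 'v" and a :: "'v \<Rightarrow> 'e" and N :: nat
    and bj :: "nat \<Rightarrow> 'v \<Rightarrow> 'e" and pos :: "'v \<Rightarrow> nat"
  assumes finE: "finite E" and tgtU: "\<And>e. e \<in> E \<Longrightarrow> tgt e \<in> U"
    and aE: "\<And>v. v \<in> U \<Longrightarrow> a v \<in> E" and ta: "\<And>v. v \<in> U \<Longrightarrow> tgt (a v) = v"
    and bj_bij: "bij_betw bj {0..<N} (PiE U (\<lambda>v. {e\<in>E. tgt e = v} - {a v}))"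
    and pos_bij: "bij_betw pos U {0..<card U}" and pos_v0: "pos v0 = 0"
begin

definition D where "D v = {e\<in>E. tgt e = v}"
definition Bset where "Bset = PiE U (\<lambda>v. D v - {a v})"
definition Xset :: "('e \<Rightarrow> real) set" where
  "Xset = {f. (\<forall>e. 0 \<le> f e) \<and> (\<forall>e. e \<notin> E \<longrightarrow> f e = 0) \<and>
     (\<forall>e\<in>E. \<forall>e'\<in>E. f e \<noteq> 0 \<longrightarrow> f e' \<noteq> 0 \<longrightarrow> tgt e = tgt e' \<longrightarrow> e = e') \<and> sum f E = 1}"
definition beta :: "('e \<Rightarrow> real) \<Rightarrow> 'v \<Rightarrow> real" where "beta f v = (\<Sum>e\<in>D v - {a v}. f e)"
definition xf :: "('e \<Rightarrow> real) \<Rightarrow> 'v \<Rightarrow> real" where "xf f = restrict (\<lambda>v. beta f v - f (a v)) U"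
definition enc :: "('v \<Rightarrow> real) \<Rightarrow> ('v \<Rightarrow> 'e) \<Rightarrow> 'e \<Rightarrow> real" where
  "enc s b = (\<lambda>e. if e \<in> E then (if e = a (tgt e) then max 0 (- s (tgt e))
      else if e = b (tgt e) then max 0 (s (tgt e)) else 0) else 0)"
definition lab :: "('e \<Rightarrow> real) \<Rightarrow> 'v \<Rightarrow> 'e" where
  "lab f = restrict (\<lambda>v. if (\<exists>e\<in>D v - {a v}. f e \<noteq> 0) then (SOME e. e \<in> D v - {a v} \<and> f e \<noteq> 0)
      else (SOME e. e \<in> D v - {a v})) U"
definition labc :: "('v \<Rightarrow> real) \<Rightarrow> ('v \<Rightarrow> 'e) \<Rightarrow> bool" where
  "labc s b \<longleftrightarrow> (\<forall>v\<in>U. s v > 0 \<longrightarrow> b v \<in> D v - {a v})"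
definition mu0 :: real where "mu0 = 1 / (2 * kk)"
definition Kn :: "real \<Rightarrow> ('e \<Rightarrow> real) \<Rightarrow> real" where
  "Kn t f = l1 (restrict (\<lambda>v. KA t (xf f) * xf f v + KB t (xf f)) U)"
definition Kf2 :: "real \<Rightarrow> ('e \<Rightarrow> real) \<Rightarrow> 'e \<Rightarrow> real" where
  "Kf2 t f = (\<lambda>e. if e \<in> E then (if e = a (tgt e)
       then max 0 (- (KA t (xf f) * xf f (tgt e) + KB t (xf f))) / Kn t f
       else max 0 (KA t (xf f) * f e + max 0 (KB t (xf f)) * (f e / max (beta f (tgt e)) mu0)
              - max 0 (- KB t (xf f))) / Kn t f) else 0)"

lemma maxdiv: assumes "n > (0::real)" shows "max 0 x / n = max 0 (x / n)"
proof (cases "x \<le> 0")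
  case True
  then have "x / n \<le> 0" using assms by (simp add: divide_nonpos_pos)
  then show ?thesis using True by simp
next
  case False
  then have "x / n > 0" using assms by simp
  then show ?thesis using False by simp
qed

lemma mu0_pos: "mu0 > 0" unfolding mu0_def using kpos by simp

lemma finD: "finite (D v)" unfolding D_def using finE by simp
lemma aD: "v \<in> U \<Longrightarrow> a v \<in> D v" unfolding D_def using aE ta by simp
lemma DE: "e \<in> D v \<Longrightarrow> e \<in> E \<and> tgt e = v" unfolding D_def by simp
lemma ED: "e \<in> E \<Longrightarrow> e \<in> D (tgt e)" unfolding D_def by simp

lemma sum_E: "(\<Sum>e\<in>E. h e) = (\<Sum>v\<in>U. \<Sum>e\<in>D v. h e)"
proof -
  have "tgt ` E \<subseteq> U" using tgtU by auto
  then have "(\<Sum>v\<in>U. sum h {e. e \<in> E \<and> tgt e = v}) = sum h E"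
    by (intro sum.group finE finU)
  then show ?thesis unfolding D_def by simp
qed

lemma sum_D: "v \<in> U \<Longrightarrow> (\<Sum>e\<in>D v. h e) = h (a v) + (\<Sum>e\<in>D v - {a v}. h e)"
  using aD finD by (simp add: sum.remove)

lemma enc_a: "v \<in> U \<Longrightarrow> enc s b (a v) = max 0 (- s v)"
  unfolding enc_def using aE ta by simp

lemma enc_o: "v \<in> U \<Longrightarrow> e \<in> D v - {a v} \<Longrightarrow> enc s b e = (if e = b v then max 0 (s v) else 0)"
  unfolding enc_def using DE by auto

lemma enc_out: "e \<notin> E \<Longrightarrow> enc s b e = 0" unfolding enc_def by simp

lemma beta_enc: assumes "labc s b" "v \<in> U" shows "beta (enc s b) v = max 0 (s v)"
proof -
  have "beta (enc s b) v = (\<Sum>e\<in>D v - {a v}. if e = b v then max 0 (s v) else 0)"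
    unfolding beta_def using assms(2) by (intro sum.cong) (simp_all add: enc_o)
  also have "\<dots> = (if b v \<in> D v - {a v} then max 0 (s v) else 0)"
    using finD by (simp add: sum.delta)
  also have "\<dots> = max 0 (s v)" using assms unfolding labc_def by auto
  finally show ?thesis .
qed

lemma xf_enc: assumes "s \<in> extensional U" "labc s b" shows "xf (enc s b) = s"
proof
  fix v show "xf (enc s b) v = s v"
  proof (cases "v \<in> U")
    case True then show ?thesis unfolding xf_def using beta_enc[OF assms(2) True] enc_a[OF True] by simp
  next
    case False then show ?thesis unfolding xf_def using assms(1) by (simp add: extensional_def)
  qed
qed

lemma sum_enc: assumes "labc s b" shows "(\<Sum>e\<in>E. enc s b e) = l1 s"
proof -
  have "(\<Sum>e\<in>E. enc s b e) = (\<Sum>v\<in>U. \<Sum>e\<in>D v. enc s b e)" by (rule sum_E)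
  also have "\<dots> = (\<Sum>v\<in>U. \<bar>s v\<bar>)"
  proof (rule sum.cong)
    fix v assume v: "v \<in> U"
    have "(\<Sum>e\<in>D v. enc s b e) = max 0 (- s v) + beta (enc s b) v"
      unfolding beta_def by (subst sum_D[OF v]) (simp add: enc_a[OF v])
    also have "\<dots> = \<bar>s v\<bar>" using beta_enc[OF assms v] by simp
    finally show "(\<Sum>e\<in>D v. enc s b e) = \<bar>s v\<bar>" .
  qed simp
  finally show ?thesis unfolding l1_def .
qed

lemma enc_nz: assumes v: "v \<in> U" "e \<in> D v" and nz: "enc s b e \<noteq> 0"
  shows "(e = a v \<and> s v < 0) \<or> (e = b v \<and> e \<noteq> a v \<and> s v > 0)"
proof (cases "e = a v")
  case True
  then have "max 0 (- s v) \<noteq> 0" using nz enc_a[OF v(1)] by simp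
  then have "s v < 0" by linarith
  then show ?thesis using True by simp
next
  case False
  then have e': "e \<in> D v - {a v}" using v by simp
  have "(if e = b v then max 0 (s v) else 0) \<noteq> 0" using nz enc_o[OF v(1) e'] by simp
  then have "e = b v" "max 0 (s v) \<noteq> 0" by (simp_all split: if_splits)
  then show ?thesis using False by linarith
qed

lemma enc_nn: "0 \<le> enc s b e" unfolding enc_def by simp

lemma enc_X: assumes "s \<in> S1" "labc s b" shows "enc s b \<in> Xset"
proof -
  have u: "e = e'" if "e \<in> E" "e' \<in> E" "enc s b e \<noteq> 0" "enc s b e' \<noteq> 0" "tgt e = tgt e'" for e e'
  proof -
    define v where "v = tgt e"
    have v: "v \<in> U" "e \<in> D v" "e' \<in> D v" using that tgtU unfolding v_def by (simp_all add: D_def)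
    have c1: "(e = a v \<and> s v < 0) \<or> (e = b v \<and> e \<noteq> a v \<and> s v > 0)" by (rule enc_nz[OF v(1,2) that(3)])
    have c2: "(e' = a v \<and> s v < 0) \<or> (e' = b v \<and> e' \<noteq> a v \<and> s v > 0)" by (rule enc_nz[OF v(1,3) that(4)])
    show ?thesis using c1 c2 by auto
  qed
  have "sum (enc s b) E = 1" using sum_enc[OF assms(2)] assms(1) unfolding S1_def by simp
  moreover have "\<forall>e. 0 \<le> enc s b e" using enc_nn by blast
  moreover have "\<forall>e. e \<notin> E \<longrightarrow> enc s b e = 0" using enc_out by blast
  ultimately show ?thesis unfolding Xset_def using u by blast
qed

lemma Xnn: "f \<in> Xset \<Longrightarrow> 0 \<le> f e" unfolding Xset_def by simp
lemma Xout: "f \<in> Xset \<Longrightarrow> e \<notin> E \<Longrightarrow> f e = 0" unfolding Xset_def by simp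
lemma Xuniq: assumes "f \<in> Xset" "e \<in> D v" "e' \<in> D v" "f e \<noteq> 0" "f e' \<noteq> 0" shows "e = e'"
proof -
  have "e \<in> E" "e' \<in> E" "tgt e = tgt e'" using DE assms(2,3) by auto
  then show ?thesis using assms(1,4,5) unfolding Xset_def by blast
qed
lemma Xsum: "f \<in> Xset \<Longrightarrow> sum f E = 1" unfolding Xset_def by simp

lemma X_loc:
  assumes f: "f \<in> Xset" and v: "v \<in> U"
  shows "(\<forall>e\<in>D v. f e = enc (xf f) (lab f) e) \<and> (xf f v > 0 \<longrightarrow> lab f v \<in> D v - {a v})"
proof (cases "\<exists>e\<in>D v - {a v}. f e \<noteq> 0")
  case True
  then obtain e1 where e1: "e1 \<in> D v - {a v}" "f e1 \<noteq> 0" by blast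
  have z: "\<And>e. e \<in> D v \<Longrightarrow> e \<noteq> e1 \<Longrightarrow> f e = 0" using Xuniq[OF f] e1 by blast
  have lab: "lab f v = e1"
  proof -
    have "lab f v = (SOME e. e \<in> D v - {a v} \<and> f e \<noteq> 0)" unfolding lab_def using v True by simp
    moreover have "(SOME e. e \<in> D v - {a v} \<and> f e \<noteq> 0) \<in> D v - {a v} \<and> f (SOME e. e \<in> D v - {a v} \<and> f e \<noteq> 0) \<noteq> 0"
      using e1 by (intro someI_ex[of "\<lambda>e. e \<in> D v - {a v} \<and> f e \<noteq> 0"]) blast
    ultimately show ?thesis using z by blast
  qed
  have fa: "f (a v) = 0" using z[of "a v"] aD[OF v] e1 by blast
  have "beta f v = (\<Sum>e\<in>D v - {a v}. if e = e1 then f e1 else 0)"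
    unfolding beta_def by (intro sum.cong) (use z in auto)
  also have "\<dots> = f e1" using finD e1 by simp
  finally have bt: "beta f v = f e1" .
  have pos: "f e1 > 0" using Xnn[OF f, of e1] e1 by simp
  have xv: "xf f v = f e1" unfolding xf_def using v bt fa by simp
  have "\<forall>e\<in>D v. f e = enc (xf f) (lab f) e"
  proof
    fix e assume e: "e \<in> D v"
    show "f e = enc (xf f) (lab f) e"
    proof (cases "e = a v")
      case True then show ?thesis using enc_a[OF v] fa xv pos by simp
    next
      case False
      then have e': "e \<in> D v - {a v}" using e by simp
      show ?thesis using enc_o[OF v e'] lab xv pos z[OF e] by auto
    qed
  qed
  then show ?thesis using lab e1 by simp
next
  case False
  then have z: "\<And>e. e \<in> D v - {a v} \<Longrightarrow> f e = 0" by blast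
  have bt: "beta f v = 0" unfolding beta_def using z by simp
  have xv: "xf f v = - f (a v)" unfolding xf_def using v bt by simp
  have nn: "f (a v) \<ge> 0" using Xnn[OF f] .
  have "\<forall>e\<in>D v. f e = enc (xf f) (lab f) e"
  proof
    fix e assume e: "e \<in> D v"
    show "f e = enc (xf f) (lab f) e"
    proof (cases "e = a v")
      case True then show ?thesis using enc_a[OF v] xv nn by simp
    next
      case False
      then have e': "e \<in> D v - {a v}" using e by simp
      show ?thesis using enc_o[OF v e'] xv nn z[OF e'] by simp
    qed
  qed
  then show ?thesis using xv nn by simp
qed

lemma X_enc: assumes f: "f \<in> Xset" shows "f = enc (xf f) (lab f)" "labc (xf f) (lab f)"
proof -
  show "f = enc (xf f) (lab f)"
  proof
    fix e show "f e = enc (xf f) (lab f) e"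
    proof (cases "e \<in> E")
      case True
      then show ?thesis using X_loc[OF f tgtU[OF True]] ED[OF True] by blast
    next
      case False
      then show ?thesis using Xout[OF f] enc_out by simp
    qed
  qed
  show "labc (xf f) (lab f)" unfolding labc_def using X_loc[OF f] by blast
qed

lemma xf_ext: "xf f \<in> extensional U" unfolding xf_def by simp
lemma lab_ext: "lab f \<in> extensional U" unfolding lab_def by simp

lemma X_S1: assumes f: "f \<in> Xset" shows "xf f \<in> S1"
proof -
  have "l1 (xf f) = (\<Sum>e\<in>E. enc (xf f) (lab f) e)" using sum_enc[OF X_enc(2)[OF f]] by simp
  also have "\<dots> = sum f E" using X_enc(1)[OF f] by simp
  finally show ?thesis unfolding S1_def using Xsum[OF f] xf_ext by simp
qed

lemma labc_Ks: assumes s: "s \<in> S1" "labc s b" and t: "0 \<le> t" "t \<le> 1"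
  shows "labc (Ks t s) b"
  unfolding labc_def
proof (intro ballI impI)
  fix v assume v: "v \<in> U" and p: "Ks t s v > 0"
  have y: "KA t s * s v + KB t s > 0" using Ks_pos[OF s(1) t v] p by simp
  have "s v > 0"
  proof (cases "KB t s > 0")
    case True
    then have "ell s > 0" using KB_pos t by blast
    then have "s v > 1 / (2 * kk)" using ell_pos v by blast
    then show ?thesis using kpos by (smt (verit) divide_pos_pos)
  next
    case False
    have "KA t s \<ge> 0" using KA_ge0 t by blast
    then show ?thesis using y False by (smt (verit) mult_nonneg_nonpos)
  qed
  then show "b v \<in> D v - {a v}" using s(2) v unfolding labc_def by blast
qed

lemma Kf2_enc: assumes s: "s \<in> S1" "labc s b" and t: "0 \<le> t" "t \<le> 1"
  shows "Kf2 t (enc s b) = enc (Ks t s) b"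
proof
  fix e
  let ?f = "enc s b"
  have xs: "xf ?f = s" using xf_enc s unfolding S1_def by blast
  define A where "A = KA t s"
  define B where "B = KB t s"
  define n where "n = l1 (restrict (\<lambda>v. A * s v + B) U)"
  have n: "n > 0" unfolding n_def A_def B_def using Ks_nz[OF s(1) t] .
  have Kn: "Kn t ?f = n" unfolding Kn_def xs n_def A_def B_def ..
  have Ksv: "\<And>v. v \<in> U \<Longrightarrow> Ks t s v = (A * s v + B) / n"
    unfolding Ks_def N1_def n_def A_def B_def by simp
  have A0: "A \<ge> 0" unfolding A_def using KA_ge0 t by blast
  show "Kf2 t ?f e = enc (Ks t s) b e"
  proof (cases "e \<in> E")
    case False then show ?thesis unfolding Kf2_def enc_def by simp
  next
    case True
    define v where "v = tgt e"
    have v: "v \<in> U" "e \<in> D v" unfolding v_def using tgtU[OF True] ED[OF True] by auto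
    show ?thesis
    proof (cases "e = a v")
      case True
      then have "Kf2 t ?f e = max 0 (- (A * s v + B)) / n"
        unfolding Kf2_def using \<open>e \<in> E\<close> Kn xs unfolding v_def A_def B_def by simp
      also have "\<dots> = max 0 (- (A * s v + B) / n)" using n by (rule maxdiv)
      also have "\<dots> = max 0 (- Ks t s v)"
      proof -
        have "- (A * s v + B) / n = - Ks t s v" using n by (simp add: Ksv[OF v(1)] field_simps)
        then show ?thesis by simp
      qed
      also have "\<dots> = enc (Ks t s) b e" using enc_a[OF v(1)] True by simp
      finally show ?thesis .
    next
      case False
      then have e': "e \<in> D v - {a v}" using v by simp
      have bt: "beta ?f v = max 0 (s v)" using beta_enc[OF s(2) v(1)] .
      have K: "Kf2 t ?f e = max 0 (A * ?f e + max 0 B * (?f e / max (max 0 (s v)) mu0) - max 0 (- B)) / n"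
        using \<open>e \<in> E\<close> Kn xs False bt unfolding Kf2_def v_def[symmetric] A_def B_def by simp
      have fe: "?f e = (if e = b v then max 0 (s v) else 0)" using enc_o[OF v(1) e'] .
      have Bpos: "B > 0 \<Longrightarrow> s v > mu0"
        using KB_pos[of t s] t ell_pos[OF _ v(1), of s] unfolding B_def mu0_def by blast
      have "max 0 (A * ?f e + max 0 B * (?f e / max (max 0 (s v)) mu0) - max 0 (- B)) =
            (if e = b v then max 0 (A * s v + B) else 0)"
      proof (cases "e = b v")
        case True
        show ?thesis
        proof (cases "s v > 0")
          case True
          show ?thesis
          proof (cases "B > 0")
            case True
            then have "s v > mu0" using Bpos by blast
            then have "?f e / max (max 0 (s v)) mu0 = 1" using fe \<open>e = b v\<close> mu0_pos by simp
            then show ?thesis using fe \<open>e = b v\<close> True \<open>s v > 0\<close> by simp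
          next
            case False
            then show ?thesis using fe \<open>e = b v\<close> \<open>s v > 0\<close> by simp
          qed
        next
          case False
          then have "\<not> B > 0" using Bpos mu0_pos by linarith
          moreover have "A * s v \<le> 0" using A0 False by (simp add: mult_nonneg_nonpos)
          ultimately show ?thesis using fe \<open>e = b v\<close> False by simp
        qed
      next
        case False
        then show ?thesis using fe by simp
      qed
      also have "\<dots> / n = enc (Ks t s) b e"
        using enc_o[OF v(1) e', of "Ks t s" b] Ksv[OF v(1)] maxdiv[OF n] by simp
      finally show ?thesis using K by simp
    qed
  qed
qed

end

context dts begin

definition KK :: nat where "KK = card U"
definition posinv :: "nat \<Rightarrow> 'v" where "posinv = inv_into U pos"
definition encW :: "nat \<Rightarrow> ('v \<Rightarrow> real) \<Rightarrow> nat \<Rightarrow> real" where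
  "encW i z = (\<lambda>n. if n div KK = i then (if n mod KK = 0 then 1 else 0) + z (posinv (n mod KK)) else 0)"
definition zblk :: "(nat \<Rightarrow> real) \<Rightarrow> nat \<Rightarrow> 'v \<Rightarrow> real" where
  "zblk w j = restrict (\<lambda>v. w (j * KK + pos v) - (if v = v0 then 1 else 0)) U"
definition Wset :: "(nat \<Rightarrow> real) set" where "Wset = wedge_spheres_set N (int KK - 1)"
definition idx where "idx = inv_into {0..<N} bj"
definition Phf :: "('e \<Rightarrow> real) \<Rightarrow> nat \<Rightarrow> real" where
  "Phf f = (\<lambda>n. if n < N * KK then (\<Prod>v\<in>U. f (bj (n div KK) v) / max (beta f v) mu0) *
      ((if n mod KK = 0 then 1 else 0) + Phs (xf f) (posinv (n mod KK))) else 0)"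
definition Psf :: "(nat \<Rightarrow> real) \<Rightarrow> 'e \<Rightarrow> real" where
  "Psf w = (\<lambda>e. if e \<in> E then (if e = a (tgt e)
      then max 0 (- ((\<Sum>j<N. Pss (zblk w j) (tgt e)) + (real N - 1) / kk))
      else (\<Sum>j<N. if bj j (tgt e) = e then max 0 (Pss (zblk w j) (tgt e)) else 0)) else 0)"
definition Gf2 :: "real \<Rightarrow> (nat \<Rightarrow> real) \<Rightarrow> nat \<Rightarrow> real" where
  "Gf2 t w = (\<lambda>n. if n < N * KK then (if n mod KK = 0 then 1 else 0) + Gs t (zblk w (n div KK)) (posinv (n mod KK)) else 0)"

lemma KKpos: "KK > 0" unfolding KK_def using finU Une by (simp add: card_gt_0_iff)
lemma kk_KK: "kk = real KK" unfolding kk_def KK_def ..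

lemma pos_lt: "v \<in> U \<Longrightarrow> pos v < KK" using pos_bij unfolding KK_def bij_betw_def by auto
lemma posinv_pos: "v \<in> U \<Longrightarrow> posinv (pos v) = v"
  unfolding posinv_def using pos_bij by (simp add: bij_betw_def)
lemma posinv_U: assumes "p < KK" shows "posinv p \<in> U"
proof -
  have "p \<in> pos ` U" using pos_bij assms unfolding KK_def bij_betw_def by auto
  then show ?thesis unfolding posinv_def by (rule inv_into_into)
qed
lemma pos_posinv: assumes "p < KK" shows "pos (posinv p) = p"
proof -
  have "p \<in> pos ` U" using pos_bij assms unfolding KK_def bij_betw_def by auto
  then show ?thesis unfolding posinv_def by (rule f_inv_into_f)
qed
lemma pos_inj: "v \<in> U \<Longrightarrow> w \<in> U \<Longrightarrow> pos v = pos w \<Longrightarrow> v = w"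
  using pos_bij unfolding bij_betw_def inj_on_def by blast
lemma pos_eq0: assumes "v \<in> U" shows "pos v = 0 \<longleftrightarrow> v = v0"
proof
  assume "pos v = 0" then have "pos v = pos v0" using pos_v0 by simp
  then show "v = v0" using pos_inj[OF assms v0U] by simp
qed (simp add: pos_v0)
lemma posinv_eq0: assumes "p < KK" shows "posinv p = v0 \<longleftrightarrow> p = 0"
proof -
  have "posinv p \<in> U" "pos (posinv p) = p" using posinv_U[OF assms] pos_posinv[OF assms] by auto
  then show ?thesis using pos_eq0[of "posinv p"] by auto
qed

lemma blk_div: "v \<in> U \<Longrightarrow> (j * KK + pos v) div KK = j"
  using pos_lt KKpos by simp
lemma blk_mod: "v \<in> U \<Longrightarrow> (j * KK + pos v) mod KK = pos v"
  using pos_lt KKpos by simp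

lemma encW_at: "v \<in> U \<Longrightarrow> encW i z (j * KK + pos v) = (if j = i then (if v = v0 then 1 else 0) + z v else 0)"
  unfolding encW_def using blk_div blk_mod posinv_pos pos_eq0 by simp

lemma zblk_encW: assumes "z \<in> extensional U"
  shows "zblk (encW i z) j = (if j = i then z else poleW)"
proof
  fix v show "zblk (encW i z) j v = (if j = i then z else poleW) v"
    using assms unfolding zblk_def poleW_def by (cases "v \<in> U") (simp_all add: encW_at extensional_def)
qed

lemma zblk_0: "zblk (\<lambda>_. 0) j = poleW"
  unfolding zblk_def poleW_def by (intro restrict_ext) simp

lemma encW_pole: "encW i poleW = (\<lambda>_. 0)"
proof
  fix n
  have "n mod KK < KK" using KKpos by simp
  then show "encW i poleW n = 0"
    unfolding encW_def poleW_def using posinv_U posinv_eq0 by simp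
qed

lemma poleW_S2: "poleW \<in> S2"
proof -
  have "sq poleW = (poleW v0)^2 + (\<Sum>u\<in>U-{v0}. (poleW u)^2)" unfolding sq_def by (rule sum_U_v0)
  also have "(\<Sum>u\<in>U-{v0}. (poleW u)^2) = 0" by (intro sum.neutral) (simp add: poleW_def)
  also have "poleW v0 = -1" using v0U by (simp add: poleW_def)
  finally have "sq poleW = 1" by simp
  moreover have "poleW \<in> extensional U" unfolding poleW_def by simp
  ultimately show ?thesis unfolding S2_def by simp
qed

lemma blocksum:
  "sq (zblk w i) = (w (i * KK) - 1)^2 + (\<Sum>j\<in>{i * KK<..<(i + 1) * KK}. (w j)^2)"
proof -
  define g where "g p = (w (i * KK + p) - (if p = 0 then 1 else 0))^2" for p
  have "sq (zblk w i) = (\<Sum>v\<in>U. g (pos v))"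
    unfolding sq_def zblk_def g_def by (intro sum.cong) (simp_all add: pos_eq0)
  also have "\<dots> = (\<Sum>p\<in>{0..<KK}. g p)"
    using pos_bij unfolding KK_def by (rule sum.reindex_bij_betw)
  also have "\<dots> = g 0 + (\<Sum>p\<in>{Suc 0..<KK}. g p)" using KKpos by (simp add: sum.atLeast_Suc_lessThan)
  also have "(\<Sum>p\<in>{Suc 0..<KK}. g p) = (\<Sum>p\<in>{Suc 0..<KK}. (w (p + i * KK))^2)"
    unfolding g_def by (intro sum.cong) (simp_all add: add.commute)
  also have "\<dots> = (\<Sum>j\<in>{Suc 0 + i * KK..<KK + i * KK}. (w j)^2)"
    by (rule sum.shift_bounds_nat_ivl[symmetric])
  also have "{Suc 0 + i * KK..<KK + i * KK} = {i * KK<..<(i + 1) * KK}"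
    by (auto simp: add.commute)
  finally show ?thesis unfolding g_def by simp
qed

lemma Wset_eq: "Wset = insert (\<lambda>_. 0) {x. \<exists>i<N. (\<forall>j. j \<notin> {i * KK..<(i + 1) * KK} \<longrightarrow> x j = 0) \<and>
     (x (i * KK) - 1)^2 + (\<Sum>j\<in>{i * KK<..<(i + 1) * KK}. (x j)^2) = 1}"
proof -
  have "\<not> int KK - 1 < 0" using KKpos by simp
  moreover have "nat (int KK - 1) + 1 = KK" using KKpos by simp
  ultimately show ?thesis unfolding Wset_def wedge_spheres_set_def Let_def by simp
qed

lemma blk_iff: "(n div KK = i) \<longleftrightarrow> n \<in> {i * KK..<(i + 1) * KK}"
proof
  assume h: "n div KK = i"
  have e: "n = i * KK + n mod KK" using div_mult_mod_eq[of n KK] h by simp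
  have "n mod KK < KK" using KKpos by simp
  then show "n \<in> {i * KK..<(i + 1) * KK}" using e by (simp del: div_mult_mod_eq)
next
  assume "n \<in> {i * KK..<(i + 1) * KK}"
  then have "KK * i \<le> n" "n < KK * Suc i" by (simp_all add: mult.commute)
  then show "n div KK = i" by (rule div_nat_eqI)
qed

lemma encW_W: assumes i: "i < N" and z: "z \<in> S2" shows "encW i z \<in> Wset"
proof -
  have ze: "z \<in> extensional U" using z unfolding S2_def by simp
  have supp: "\<forall>j. j \<notin> {i * KK..<(i + 1) * KK} \<longrightarrow> encW i z j = 0"
    unfolding encW_def using blk_iff by simp
  have "sq (zblk (encW i z) i) = 1" using zblk_encW[OF ze] z unfolding S2_def by simp
  then have "(encW i z (i * KK) - 1)^2 + (\<Sum>j\<in>{i * KK<..<(i + 1) * KK}. (encW i z j)^2) = 1"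
    using blocksum by simp
  then show ?thesis unfolding Wset_eq using i supp by blast
qed

lemma zero_W: "(\<lambda>_. 0) \<in> Wset" unfolding Wset_eq by simp

lemma W_cases: assumes w: "w \<in> Wset"
  shows "w = (\<lambda>_. 0) \<or> (\<exists>i<N. zblk w i \<in> S2 \<and> w = encW i (zblk w i))"
proof (cases "w = (\<lambda>_. 0)")
  case False
  then obtain i where i: "i < N" and supp: "\<forall>j. j \<notin> {i * KK..<(i + 1) * KK} \<longrightarrow> w j = 0"
    and sph: "(w (i * KK) - 1)^2 + (\<Sum>j\<in>{i * KK<..<(i + 1) * KK}. (w j)^2) = 1"
    using w unfolding Wset_eq by blast
  have S: "zblk w i \<in> S2" unfolding S2_def using blocksum sph by (simp add: zblk_def)
  have "w = encW i (zblk w i)"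
  proof
    fix n show "w n = encW i (zblk w i) n"
    proof (cases "n div KK = i")
      case True
      define p where "p = n mod KK"
      have p: "p < KK" unfolding p_def using KKpos by simp
      have n: "n = i * KK + pos (posinv p)" using div_mult_mod_eq[of n KK] True pos_posinv[OF p]
        unfolding p_def by simp
      show ?thesis unfolding encW_def zblk_def using True p posinv_U[OF p] posinv_eq0[OF p] n
        unfolding p_def[symmetric] by simp
    next
      case False
      then have "n \<notin> {i * KK..<(i + 1) * KK}" using blk_iff by blast
      then have "w n = 0" using supp by blast
      then show ?thesis unfolding encW_def using False by simp
    qed
  qed
  then show ?thesis using i S by blast
qed simp

lemma zblk_S2: assumes "w \<in> Wset" shows "zblk w j \<in> S2"
proof -
  consider "w = (\<lambda>_. 0)" | i where "i < N" "zblk w i \<in> S2" "w = encW i (zblk w i)"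
    using W_cases[OF assms] by blast
  then show ?thesis
  proof cases
    case 1 then show ?thesis using zblk_0 poleW_S2 by simp
  next
    case 2
    have "zblk w j = zblk (encW i (zblk w i)) j" using 2 by simp
    also have "\<dots> = (if j = i then zblk w i else poleW)"
      by (rule zblk_encW) (simp add: zblk_def)
    finally show ?thesis using 2 poleW_S2 by simp
  qed
qed

end

context dts begin

lemma Pss_poleW_v: "v \<in> U \<Longrightarrow> Pss poleW v = -1/kk"
  using Pss_pole by (simp add: poleX_def)

lemma sum_split_i: "i < N \<Longrightarrow> (\<Sum>j<N. h j) = h i + (\<Sum>j\<in>{..<N}-{i}. h j)"
  by (simp add: sum.remove)

lemma card_minus_i: "i < N \<Longrightarrow> real (card ({..<N} - {i})) = real N - 1"
  by (simp add: of_nat_diff)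

lemma sum_if_i: assumes i: "i < N" shows "(\<Sum>j<N. if j = i then x else y) = x + (real N - 1) * (y::real)"
proof -
  have "(\<Sum>j<N. if j = i then x else y) = x + (\<Sum>j\<in>{..<N}-{i}. if j = i then x else y)"
    using sum_split_i[OF i, of "\<lambda>j. if j = i then x else y"] by simp
  also have "(\<Sum>j\<in>{..<N}-{i}. if j = i then x else y) = (\<Sum>j\<in>{..<N}-{i}. y)"
    by (intro sum.cong) auto
  also have "\<dots> = (real N - 1) * y" using card_minus_i[OF i] by simp
  finally show ?thesis .
qed

lemma S2_ext: "z \<in> S2 \<Longrightarrow> z \<in> extensional U" unfolding S2_def by simp

lemma Psf_encW: assumes i: "i < N" and z: "z \<in> S2" shows "Psf (encW i z) = enc (Pss z) (bj i)"
proof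
  fix e
  have zb: "\<And>j. zblk (encW i z) j = (if j = i then z else poleW)" using zblk_encW S2_ext[OF z] by blast
  show "Psf (encW i z) e = enc (Pss z) (bj i) e"
  proof (cases "e \<in> E")
    case False then show ?thesis unfolding Psf_def enc_def by simp
  next
    case True
    define v where "v = tgt e"
    have v: "v \<in> U" unfolding v_def using tgtU True by simp
    have "(\<Sum>j<N. Pss (zblk (encW i z) j) v) = (\<Sum>j<N. if j = i then Pss z v else -1/kk)"
      by (intro sum.cong) (simp_all add: zb Pss_poleW_v[OF v])
    also have "\<dots> = Pss z v + (real N - 1) * (-1/kk)" by (rule sum_if_i[OF i])
    finally have s1': "(\<Sum>j<N. Pss (zblk (encW i z) j) v) + (real N - 1) / kk = Pss z v"
      by (simp add: field_simps)
    have s2: "(\<Sum>j<N. if bj j v = e then max 0 (Pss (zblk (encW i z) j) v) else 0) =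
              (if bj i v = e then max 0 (Pss z v) else 0)"
    proof -
      have "(\<Sum>j<N. if bj j v = e then max 0 (Pss (zblk (encW i z) j) v) else 0) =
            (\<Sum>j<N. if j = i then (if bj i v = e then max 0 (Pss z v) else 0) else 0)"
        using kpos by (intro sum.cong) (simp_all add: zb Pss_poleW_v[OF v])
      also have "\<dots> = (if bj i v = e then max 0 (Pss z v) else 0)" by (simp add: sum_if_i[OF i])
      finally show ?thesis .
    qed
    show ?thesis
    proof (cases "e = a v")
      case True
      then show ?thesis unfolding Psf_def enc_def using \<open>e \<in> E\<close> s1' unfolding v_def[symmetric] by simp
    next
      case False
      then show ?thesis unfolding Psf_def enc_def using \<open>e \<in> E\<close> s2 unfolding v_def[symmetric] by auto
    qed
  qed
qed

lemma Psf_0: "Psf (\<lambda>_. 0) = enc poleX b"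
proof
  fix e
  show "Psf (\<lambda>_. 0) e = enc poleX b e"
  proof (cases "e \<in> E")
    case False then show ?thesis unfolding Psf_def enc_def by simp
  next
    case True
    define v where "v = tgt e"
    have v: "v \<in> U" unfolding v_def using tgtU True by simp
    have s1: "(\<Sum>j<N. Pss (zblk (\<lambda>_. 0) j) v) + (real N - 1) / kk = - 1 / kk"
      using zblk_0 Pss_poleW_v[OF v] kpos by (simp add: field_simps)
    have s2: "(\<Sum>j<N. if bj j v = e then max 0 (Pss (zblk (\<lambda>_. 0) j) v) else 0) = 0"
      using zblk_0 Pss_poleW_v[OF v] kpos by (intro sum.neutral) simp
    have pv: "poleX v = -1/kk" using v by (simp add: poleX_def)
    show ?thesis
      unfolding Psf_def enc_def using \<open>e \<in> E\<close> s1 s2 pv kpos unfolding v_def[symmetric] by simp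
  qed
qed

lemma Bset_eq: "Bset = PiE U (\<lambda>v. {e\<in>E. tgt e = v} - {a v})" unfolding Bset_def D_def ..

lemma bj_B: "j < N \<Longrightarrow> bj j \<in> Bset"
  using bj_bij unfolding Bset_eq bij_betw_def by auto

lemma idx_bj: "j < N \<Longrightarrow> idx (bj j) = j"
  unfolding idx_def using bj_bij by (simp add: bij_betw_inv_into_left)

lemma bj_idx: "b \<in> Bset \<Longrightarrow> bj (idx b) = b"
  unfolding idx_def using bj_bij Bset_eq by (simp add: bij_betw_inv_into_right)

lemma idx_lt: "b \<in> Bset \<Longrightarrow> idx b < N"
proof -
  assume b: "b \<in> Bset"
  have "idx b \<in> {0..<N}" unfolding idx_def using bj_bij b Bset_eq
    by (metis bij_betw_def inv_into_into)
  then show ?thesis by simp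
qed

lemma labc_bj: "j < N \<Longrightarrow> labc s (bj j)"
  using bj_B unfolding labc_def Bset_def by auto

lemma pole_blk: "p < KK \<Longrightarrow> (if p = 0 then 1 else 0) + poleW (posinv p) = 0"
  using posinv_U posinv_eq0 by (simp add: poleW_def)

lemma div_ge_N: "\<not> n < N * KK \<Longrightarrow> n div KK \<ge> N"
  using KKpos by (simp add: div_less_iff_less_mult[symmetric] not_less)

lemma div_lt_N: "n < N * KK \<Longrightarrow> n div KK < N"
  using KKpos by (simp add: div_less_iff_less_mult)

lemma prod_01: "(\<Prod>v\<in>U. if P v then (1::real) else 0) = (if \<forall>v\<in>U. P v then 1 else 0)"
proof (cases "\<forall>v\<in>U. P v")
  case True then show ?thesis by simp
next
  case False
  then obtain v where "v \<in> U" "\<not> P v" by blast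
  then have "(\<Prod>v\<in>U. if P v then (1::real) else 0) = 0" using finU by (auto simp: prod_zero_iff)
  then show ?thesis using False by simp
qed

lemma Phf_enc: assumes s: "s \<in> S1" "labc s b" and be: "b \<in> extensional U"
  shows "Phf (enc s b) = (if ell s > 0 then encW (idx b) (Phs s) else (\<lambda>_. 0))"
    and "ell s > 0 \<Longrightarrow> b \<in> Bset"
proof -
  show B: "b \<in> Bset" if ep: "ell s > 0"
  proof -
    have "\<And>v. v \<in> U \<Longrightarrow> b v \<in> D v - {a v}"
    proof -
      fix v assume v: "v \<in> U"
      have "s v > 1 / (2 * kk)" using ell_pos[OF ep v] .
      then have "s v > 0" using kpos by (smt (verit) divide_pos_pos)
      then show "b v \<in> D v - {a v}" using s(2) v unfolding labc_def by blast
    qed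
    then show ?thesis unfolding Bset_def using be by (simp add: PiE_iff)
  qed
  have xs: "xf (enc s b) = s" using xf_enc s unfolding S1_def by blast
  show "Phf (enc s b) = (if ell s > 0 then encW (idx b) (Phs s) else (\<lambda>_. 0))"
  proof (cases "ell s > 0")
    case False
    then have e0: "ell s = 0" using ell_range[of s] by linarith
    have "Phf (enc s b) = (\<lambda>_. 0)"
    proof
      fix n
      have "n mod KK < KK" using KKpos by simp
      then have "(if n mod KK = 0 then 1 else 0) + Phs s (posinv (n mod KK)) = 0"
        using pole_blk Phs_ell0[OF e0] by simp
      then show "Phf (enc s b) n = 0" unfolding Phf_def xs by simp
    qed
    then show ?thesis using False by simp
  next
    case True
    have b: "b \<in> Bset" using B True by blast
    have sv: "\<And>v. v \<in> U \<Longrightarrow> s v > mu0" using ell_pos[OF True] unfolding mu0_def by blast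
    have fac: "enc s b (bj j v) / max (beta (enc s b) v) mu0 = (if bj j v = b v then 1 else 0)"
      if j: "j < N" and v: "v \<in> U" for j v
    proof -
      have bjv: "bj j v \<in> D v - {a v}" using bj_B[OF j] v unfolding Bset_def by auto
      have "beta (enc s b) v = s v" using beta_enc[OF s(2) v] sv[OF v] mu0_pos by simp
      moreover have "max (s v) mu0 = s v" using sv[OF v] by simp
      moreover have "enc s b (bj j v) = (if bj j v = b v then s v else 0)"
        using enc_o[OF v bjv] sv[OF v] mu0_pos by simp
      ultimately show ?thesis using sv[OF v] mu0_pos by simp
    qed
    have pr: "(\<Prod>v\<in>U. enc s b (bj j v) / max (beta (enc s b) v) mu0) = (if j = idx b then 1 else 0)"
      if j: "j < N" for j
    proof -
      have "(\<Prod>v\<in>U. enc s b (bj j v) / max (beta (enc s b) v) mu0) = (\<Prod>v\<in>U. if bj j v = b v then 1 else 0)"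
        using fac[OF j] by (intro prod.cong) simp_all
      also have "\<dots> = (if \<forall>v\<in>U. bj j v = b v then 1 else 0)" by (rule prod_01)
      also have "(\<forall>v\<in>U. bj j v = b v) \<longleftrightarrow> j = idx b"
      proof
        assume h: "\<forall>v\<in>U. bj j v = b v"
        have "bj j = b"
        proof
          fix v show "bj j v = b v"
            using h bj_B[OF j] be unfolding Bset_def by (cases "v \<in> U") (auto simp: PiE_def extensional_def)
        qed
        then show "j = idx b" using idx_bj[OF j] by simp
      next
        assume "j = idx b" then show "\<forall>v\<in>U. bj j v = b v" using bj_idx[OF b] by simp
      qed
      finally show ?thesis .
    qed
    have "Phf (enc s b) = encW (idx b) (Phs s)"
    proof
      fix n show "Phf (enc s b) n = encW (idx b) (Phs s) n"
      proof (cases "n < N * KK")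
        case True
        then show ?thesis unfolding Phf_def encW_def xs using pr[OF div_lt_N[OF True]] by simp
      next
        case False
        have "n div KK \<noteq> idx b" using div_ge_N[OF False] idx_lt[OF b] by simp
        then show ?thesis unfolding Phf_def encW_def using False by simp
      qed
    qed
    then show ?thesis using True by simp
  qed
qed

lemma Gf2_encW: assumes i: "i < N" and z: "z \<in> S2" and t: "0 \<le> t" "t \<le> 1"
  shows "Gf2 t (encW i z) = encW i (Gs t z)"
proof
  fix n
  have zb: "\<And>j. zblk (encW i z) j = (if j = i then z else poleW)" using zblk_encW S2_ext[OF z] by blast
  have p: "n mod KK < KK" using KKpos by simp
  show "Gf2 t (encW i z) n = encW i (Gs t z) n"
  proof (cases "n < N * KK")
    case True
    show ?thesis
    proof (cases "n div KK = i")
      case True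
      then have "zblk (encW i z) (n div KK) = z" using zb by simp
      then have "Gf2 t (encW i z) n = (if n mod KK = 0 then 1 else 0) + Gs t z (posinv (n mod KK))"
        unfolding Gf2_def using \<open>n < N * KK\<close> by simp
      then show ?thesis unfolding encW_def using True by simp
    next
      case False
      then have "zblk (encW i z) (n div KK) = poleW" using zb by simp
      then have "Gf2 t (encW i z) n = 0"
        unfolding Gf2_def using \<open>n < N * KK\<close> Gs_pole[OF t] pole_blk[OF p] by simp
      then show ?thesis unfolding encW_def using False by simp
    qed
  next
    case False
    have "n div KK \<noteq> i" using div_ge_N[OF False] i by simp
    then show ?thesis unfolding Gf2_def encW_def using False by simp
  qed
qed

lemma Gf2_0: assumes t: "0 \<le> t" "t \<le> 1" shows "Gf2 t (\<lambda>_. 0) = (\<lambda>_. 0)"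
proof
  fix n
  have p: "n mod KK < KK" using KKpos by simp
  show "Gf2 t (\<lambda>_. 0) n = 0" unfolding Gf2_def zblk_0 Gs_pole[OF t] using pole_blk[OF p] by simp
qed

lemma poleX_neg: "v \<in> U \<Longrightarrow> \<not> poleX v > 0" using kpos by (simp add: poleX_def)

lemma labc_poleX: "labc poleX b" unfolding labc_def using poleX_neg by blast

lemma Kf2_X: assumes f: "f \<in> Xset" and t: "0 \<le> t" "t \<le> 1" shows "Kf2 t f \<in> Xset"
proof -
  have "Kf2 t f = Kf2 t (enc (xf f) (lab f))" using X_enc(1)[OF f] by simp
  also have "\<dots> = enc (Ks t (xf f)) (lab f)" using Kf2_enc[OF X_S1[OF f] X_enc(2)[OF f] t] .
  finally show ?thesis using enc_X Ks_S1[OF X_S1[OF f] t] labc_Ks[OF X_S1[OF f] X_enc(2)[OF f] t] by simp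
qed

lemma Kf2_0: assumes f: "f \<in> Xset" shows "Kf2 0 f = f"
proof -
  have "Kf2 0 f = Kf2 0 (enc (xf f) (lab f))" using X_enc(1)[OF f] by simp
  also have "\<dots> = enc (Ks 0 (xf f)) (lab f)" using Kf2_enc[OF X_S1[OF f] X_enc(2)[OF f]] by simp
  also have "\<dots> = f" using Ks_0[OF X_S1[OF f]] X_enc(1)[OF f] by simp
  finally show ?thesis .
qed

lemma Kf2_1: assumes f: "f \<in> Xset" shows "Kf2 1 f = Psf (Phf f)"
proof -
  define s where "s = xf f"
  define b where "b = lab f"
  have s: "s \<in> S1" "labc s b" unfolding s_def b_def using X_S1[OF f] X_enc(2)[OF f] by auto
  have fe: "f = enc s b" unfolding s_def b_def using X_enc(1)[OF f] .
  have "Kf2 1 f = enc (Ks 1 s) b" using fe Kf2_enc[OF s] by simp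
  also have "\<dots> = enc (Pss (Phs s)) b" using Ks_1[OF s(1)] by simp
  finally have K: "Kf2 1 f = enc (Pss (Phs s)) b" .
  have P: "Phf f = (if ell s > 0 then encW (idx b) (Phs s) else (\<lambda>_. 0))"
    using fe Phf_enc(1)[OF s] lab_ext unfolding b_def by simp
  show ?thesis
  proof (cases "ell s > 0")
    case True
    have b: "b \<in> Bset" using Phf_enc(2)[OF s _ True] lab_ext unfolding b_def by blast
    have "Psf (Phf f) = enc (Pss (Phs s)) (bj (idx b))"
      using P True Psf_encW[OF idx_lt[OF b] Phs_S2[OF s(1)]] by simp
    then show ?thesis using K bj_idx[OF b] by simp
  next
    case False
    then have "ell s = 0" using ell_range[of s] by linarith
    then have "Pss (Phs s) = poleX" using Phs_ell0 Pss_pole by simp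
    then show ?thesis using K P False Psf_0 by simp
  qed
qed

lemma Phf_W: assumes f: "f \<in> Xset" shows "Phf f \<in> Wset"
proof -
  have s: "xf f \<in> S1" "labc (xf f) (lab f)" using X_S1[OF f] X_enc(2)[OF f] by auto
  have P: "Phf f = (if ell (xf f) > 0 then encW (idx (lab f)) (Phs (xf f)) else (\<lambda>_. 0))"
    using X_enc(1)[OF f] Phf_enc(1)[OF s lab_ext] by simp
  show ?thesis
  proof (cases "ell (xf f) > 0")
    case True
    have "lab f \<in> Bset" using Phf_enc(2)[OF s lab_ext True] .
    then show ?thesis using P True encW_W idx_lt Phs_S2[OF s(1)] by simp
  qed (use P zero_W in simp)
qed

lemma Psf_X: assumes w: "w \<in> Wset" shows "Psf w \<in> Xset"
proof -
  consider "w = (\<lambda>_. 0)" | i where "i < N" "zblk w i \<in> S2" "w = encW i (zblk w i)"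
    using W_cases[OF w] by blast
  then show ?thesis
  proof cases
    case 1 then show ?thesis using Psf_0 enc_X poleX_S1 labc_poleX by metis
  next
    case 2
    then have "Psf w = enc (Pss (zblk w i)) (bj i)" using Psf_encW by metis
    then show ?thesis using enc_X Pss_S1 2 labc_bj by simp
  qed
qed

lemma Gf2_W: assumes w: "w \<in> Wset" and t: "0 \<le> t" "t \<le> 1" shows "Gf2 t w \<in> Wset"
proof -
  consider "w = (\<lambda>_. 0)" | i where "i < N" "zblk w i \<in> S2" "w = encW i (zblk w i)"
    using W_cases[OF w] by blast
  then show ?thesis
  proof cases
    case 1 then show ?thesis using Gf2_0[OF t] zero_W by simp
  next
    case 2
    then have "Gf2 t w = encW i (Gs t (zblk w i))" using Gf2_encW t by metis
    then show ?thesis using encW_W Gs_S2 2 t by simp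
  qed
qed

lemma Gf2_0w: assumes w: "w \<in> Wset" shows "Gf2 0 w = w"
proof -
  consider "w = (\<lambda>_. 0)" | i where "i < N" "zblk w i \<in> S2" "w = encW i (zblk w i)"
    using W_cases[OF w] by blast
  then show ?thesis
  proof cases
    case 1 then show ?thesis using Gf2_0 by simp
  next
    case 2
    then have "Gf2 0 w = encW i (Gs 0 (zblk w i))" using Gf2_encW by (metis order_refl zero_le_one)
    then show ?thesis using Gs_0 2 by simp
  qed
qed

lemma Gf2_1: assumes w: "w \<in> Wset" shows "Gf2 1 w = Phf (Psf w)"
proof -
  consider "w = (\<lambda>_. 0)" | i where "i < N" "zblk w i \<in> S2" "w = encW i (zblk w i)"
    using W_cases[OF w] by blast
  then show ?thesis
  proof cases
    case 1
    define b0 :: "'v \<Rightarrow> 'e" where "b0 = restrict (\<lambda>v. a v) U"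
    have "Phf (enc poleX b0) = (\<lambda>_. 0)"
      using Phf_enc(1)[OF poleX_S1 labc_poleX, of b0] ell_poleX unfolding b0_def by simp
    then show ?thesis using 1 Gf2_0 Psf_0[of b0] by simp
  next
    case 2
    define z where "z = zblk w i"
    have z: "z \<in> S2" "w = encW i z" using 2 unfolding z_def by auto
    have G: "Gf2 1 w = encW i (Phs (Pss z))" using Gf2_encW[OF 2(1) z(1)] Gs_1[OF z(1)] z(2) by simp
    have Ps: "Psf w = enc (Pss z) (bj i)" using Psf_encW[OF 2(1) z(1)] z(2) by simp
    have bje: "bj i \<in> extensional U" using bj_B[OF 2(1)] unfolding Bset_def by (simp add: PiE_def)
    have Ph: "Phf (Psf w) = (if ell (Pss z) > 0 then encW (idx (bj i)) (Phs (Pss z)) else (\<lambda>_. 0))"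
      using Ps Phf_enc(1)[OF Pss_S1[OF z(1)] labc_bj[OF 2(1)] bje] by simp
    show ?thesis
    proof (cases "ell (Pss z) > 0")
      case True then show ?thesis using G Ph idx_bj[OF 2(1)] by simp
    next
      case False
      then have "ell (Pss z) = 0" using ell_range[of "Pss z"] by linarith
      then show ?thesis using G Ph False Phs_ell0 encW_pole by simp
    qed
  qed
qed

end


abbreviation PT :: "('x \<Rightarrow> real) topology" where "PT \<equiv> product_topology (\<lambda>_. euclideanreal) UNIV"

lemma topspace_PT_sub [simp]: "topspace (subtopology PT S) = S"
  by (simp add: topspace_subtopology)

lemma proj_cont: "continuous_map T (subtopology PT S) g \<Longrightarrow> continuous_map T euclideanreal (\<lambda>x. g x i)"
proof -
  assume g: "continuous_map T (subtopology PT S) g"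
  have "continuous_map (subtopology PT S) euclideanreal (\<lambda>f. f i)"
    by (intro continuous_map_from_subtopology continuous_map_product_projection) simp
  then show ?thesis using continuous_map_compose[OF g] by (simp add: o_def)
qed

lemma cont_into:
  assumes "\<And>i. continuous_map T euclideanreal (\<lambda>x. g x i)" "\<And>x. x \<in> topspace T \<Longrightarrow> g x \<in> S"
  shows "continuous_map T (subtopology PT S) g"
  using assms by (auto simp: continuous_map_in_subtopology continuous_map_componentwise_UNIV)

lemma hom_from:
  assumes h: "continuous_map (prod_topology (top_of_set {0..1::real}) X) Y h"
    and h0: "\<And>x. x \<in> topspace X \<Longrightarrow> h (0, x) = f x"
    and h1: "\<And>x. x \<in> topspace X \<Longrightarrow> h (1, x) = g x"
  shows "homotopic_with (\<lambda>_. True) X Y f g"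
proof -
  define h' where "h' = (\<lambda>p. if snd p \<in> topspace X then h p else if fst p = (0::real) then f (snd p) else g (snd p))"
  have "continuous_map (prod_topology (top_of_set {0..1}) X) Y h'"
    by (rule continuous_map_eq[OF h]) (auto simp: topspace_prod_topology h'_def)
  moreover have "\<forall>x. h' (0, x) = f x" using h0 by (simp add: h'_def)
  moreover have "\<forall>x. h' (1, x) = g x" using h1 by (simp add: h'_def)
  ultimately show ?thesis unfolding homotopic_with_def by blast
qed

context dts begin

abbreviation Xtop where "Xtop \<equiv> subtopology PT Xset"
abbreviation Wtop where "Wtop \<equiv> subtopology PT Wset"

lemma cont_beta: "continuous_map T Xtop g \<Longrightarrow> continuous_map T euclideanreal (\<lambda>x. beta (g x) v)"
  unfolding beta_def by (intro continuous_intros proj_cont[of T Xset g]) (simp_all add: finD)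

lemma cvec_xf: "continuous_map T Xtop g \<Longrightarrow> cvec T (\<lambda>x. xf (g x))"
  unfolding xf_def by (intro cvec_restrict continuous_intros cont_beta proj_cont[of T Xset g])

lemma cvec_zblk: "continuous_map T Wtop g \<Longrightarrow> cvec T (\<lambda>x. zblk (g x) j)"
  unfolding zblk_def by (intro cvec_restrict continuous_intros proj_cont[of T Wset g])

lemma cont_Phf: "continuous_map Xtop Wtop Phf"
proof (rule cont_into)
  fix n
  have idc: "continuous_map Xtop Xtop (\<lambda>f. f)" by simp
  have cP: "cvec Xtop (\<lambda>f. Phs (xf f))"
    by (rule cvec_Phs[OF cvec_xf[OF idc]]) (simp add: X_S1)
  show "continuous_map Xtop euclideanreal (\<lambda>f. Phf f n)"
  proof (cases "n < N * KK")
    case True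
    have "continuous_map Xtop euclideanreal
      (\<lambda>f. (\<Prod>v\<in>U. f (bj (n div KK) v) / max (beta f v) mu0) *
        ((if n mod KK = 0 then 1 else 0) + Phs (xf f) (posinv (n mod KK))))"
    proof (intro continuous_intros cont_beta[OF idc] proj_cont[OF idc] cvecD[OF cP])
      fix f v show "max (beta f v) mu0 \<noteq> 0" using mu0_pos by (smt (verit) max.cobounded2)
    qed (simp_all add: finU)
    then show ?thesis unfolding Phf_def using True by simp
  next
    case False then show ?thesis unfolding Phf_def by simp
  qed
next
  fix f assume "f \<in> topspace Xtop" then show "Phf f \<in> Wset" using Phf_W by simp
qed

lemma cont_Psf: "continuous_map Wtop Xtop Psf"
proof (rule cont_into)
  fix e
  have idc: "continuous_map Wtop Wtop (\<lambda>w. w)" by simp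
  have cP: "\<And>j. cvec Wtop (\<lambda>w. Pss (zblk w j))"
    by (rule cvec_Pss[OF cvec_zblk[OF idc]]) (simp add: zblk_S2)
  show "continuous_map Wtop euclideanreal (\<lambda>w. Psf w e)"
  proof (cases "e \<in> E")
    case True
    show ?thesis
    proof (cases "e = a (tgt e)")
      case True
      have "continuous_map Wtop euclideanreal (\<lambda>w. max 0 (- ((\<Sum>j<N. Pss (zblk w j) (tgt e)) + (real N - 1) / kk)))"
        by (intro continuous_intros cvecD[OF cP]) simp_all
      then show ?thesis unfolding Psf_def using \<open>e \<in> E\<close> True by simp
    next
      case False
      have "continuous_map Wtop euclideanreal (\<lambda>w. if bj j (tgt e) = e then max 0 (Pss (zblk w j) (tgt e)) else 0)" for j
        by (cases "bj j (tgt e) = e") (simp_all add: continuous_map_real_max cvecD[OF cP])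
      then have "continuous_map Wtop euclideanreal (\<lambda>w. (\<Sum>j<N. if bj j (tgt e) = e then max 0 (Pss (zblk w j) (tgt e)) else 0))"
        by (intro continuous_map_sum) auto
      then show ?thesis unfolding Psf_def using \<open>e \<in> E\<close> False by simp
    qed
  next
    case False then show ?thesis unfolding Psf_def by simp
  qed
next
  fix w assume "w \<in> topspace Wtop" then show "Psf w \<in> Xset" using Psf_X by simp
qed

abbreviation I01 where "I01 \<equiv> top_of_set {0..1::real}"

lemma fst_cont: "continuous_map (prod_topology I01 X) euclideanreal fst"
  using continuous_map_into_fulltopology[OF continuous_map_fst] .

lemma fst_range: "p \<in> topspace (prod_topology I01 X) \<Longrightarrow> 0 \<le> fst p \<and> fst p \<le> 1"
  by (auto simp: topspace_prod_topology)

lemma cont_Kf: "continuous_map (prod_topology I01 Xtop) Xtop (\<lambda>p. Kf2 (fst p) (snd p))"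
proof (rule cont_into)
  let ?T = "prod_topology I01 Xtop"
  fix e
  have sc: "continuous_map ?T Xtop snd" by (rule continuous_map_snd)
  have cx: "cvec ?T (\<lambda>p. xf (snd p))" by (rule cvec_xf[OF sc])
  have S: "\<And>p. p \<in> topspace ?T \<Longrightarrow> xf (snd p) \<in> S1 \<and> 0 \<le> fst p \<and> fst p \<le> 1"
    using X_S1 fst_range by (auto simp: topspace_prod_topology)
  have cA: "continuous_map ?T euclideanreal (\<lambda>p. KA (fst p) (xf (snd p)))"
    by (rule cont_KA[OF fst_cont cx])
  have cB: "continuous_map ?T euclideanreal (\<lambda>p. KB (fst p) (xf (snd p)))"
    by (rule cont_KB[OF fst_cont cx])
  have cn: "continuous_map ?T euclideanreal (\<lambda>p. Kn (fst p) (snd p))"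
    unfolding Kn_def by (intro cont_l1 cvec_restrict continuous_intros cA cB cvecD[OF cx])
  have nz: "\<And>p. p \<in> topspace ?T \<Longrightarrow> Kn (fst p) (snd p) \<noteq> 0"
    unfolding Kn_def using Ks_nz S by fastforce
  show "continuous_map ?T euclideanreal (\<lambda>p. Kf2 (fst p) (snd p) e)"
  proof (cases "e \<in> E")
    case True
    show ?thesis
    proof (cases "e = a (tgt e)")
      case True
      have "continuous_map ?T euclideanreal (\<lambda>p. max 0 (- (KA (fst p) (xf (snd p)) * xf (snd p) (tgt e) + KB (fst p) (xf (snd p)))) / Kn (fst p) (snd p))"
        by (intro continuous_intros cA cB cn cvecD[OF cx] nz) simp_all
      then show ?thesis unfolding Kf2_def using \<open>e \<in> E\<close> True by simp
    next
      case False
      have "continuous_map ?T euclideanreal (\<lambda>p. max 0 (KA (fst p) (xf (snd p)) * snd p e + max 0 (KB (fst p) (xf (snd p))) * (snd p e / max (beta (snd p) (tgt e)) mu0)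
              - max 0 (- KB (fst p) (xf (snd p)))) / Kn (fst p) (snd p))"
      proof (intro continuous_intros cA cB cn nz proj_cont[OF sc] cont_beta[OF sc])
        fix p show "max (beta (snd p) (tgt e)) mu0 \<noteq> 0" using mu0_pos by (smt (verit) max.cobounded2)
      qed simp_all
      then show ?thesis unfolding Kf2_def using \<open>e \<in> E\<close> False by simp
    qed
  next
    case False then show ?thesis unfolding Kf2_def by simp
  qed
next
  fix p assume "p \<in> topspace (prod_topology I01 Xtop)"
  then show "Kf2 (fst p) (snd p) \<in> Xset" using Kf2_X fst_range by (auto simp: topspace_prod_topology)
qed

lemma cont_Gf: "continuous_map (prod_topology I01 Wtop) Wtop (\<lambda>p. Gf2 (fst p) (snd p))"
proof (rule cont_into)
  let ?T = "prod_topology I01 Wtop"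
  fix n
  have sc: "continuous_map ?T Wtop snd" by (rule continuous_map_snd)
  have S: "\<And>p j. p \<in> topspace ?T \<Longrightarrow> zblk (snd p) j \<in> S2 \<and> 0 \<le> fst p \<and> fst p \<le> 1"
    using zblk_S2 fst_range by (auto simp: topspace_prod_topology)
  have cG: "cvec ?T (\<lambda>p. Gs (fst p) (zblk (snd p) j))" for j
    by (rule cvec_Gs[OF fst_cont cvec_zblk[OF sc]]) (use S in blast)
  show "continuous_map ?T euclideanreal (\<lambda>p. Gf2 (fst p) (snd p) n)"
  proof (cases "n < N * KK")
    case True
    have "continuous_map ?T euclideanreal (\<lambda>p. (if n mod KK = 0 then 1 else 0) + Gs (fst p) (zblk (snd p) (n div KK)) (posinv (n mod KK)))"
      by (intro continuous_intros cvecD[OF cG]) simp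
    then show ?thesis unfolding Gf2_def using True by simp
  next
    case False then show ?thesis unfolding Gf2_def by simp
  qed
next
  fix p assume "p \<in> topspace (prod_topology I01 Wtop)"
  then show "Gf2 (fst p) (snd p) \<in> Wset" using Gf2_W fst_range by (auto simp: topspace_prod_topology)
qed

theorem X_heq_W: "Xtop homotopy_equivalent_space Wtop"
  unfolding homotopy_equivalent_space_def
proof (intro exI conjI)
  show "continuous_map Xtop Wtop Phf" by (rule cont_Phf)
  show "continuous_map Wtop Xtop Psf" by (rule cont_Psf)
  have "homotopic_with (\<lambda>_. True) Xtop Xtop id (Psf \<circ> Phf)"
    by (rule hom_from[OF cont_Kf]) (simp_all add: Kf2_0 Kf2_1)
  then show "homotopic_with (\<lambda>_. True) Xtop Xtop (Psf \<circ> Phf) id" by (rule homotopic_with_symD)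
  have "homotopic_with (\<lambda>_. True) Wtop Wtop id (Phf \<circ> Psf)"
    by (rule hom_from[OF cont_Gf]) (simp_all add: Gf2_0w Gf2_1)
  then show "homotopic_with (\<lambda>_. True) Wtop Wtop (Phf \<circ> Psf) id" by (rule homotopic_with_symD)
qed

end


lemma geom_eq:
  assumes finE: "finite E" and ac: "acyclic (edge_rel src tgt E)"
  shows "geom_realization (DT E src tgt) = subtopology PT
    {f. (\<forall>e. 0 \<le> f e) \<and> (\<forall>e. e \<notin> E \<longrightarrow> f e = 0) \<and>
     (\<forall>e\<in>E. \<forall>e'\<in>E. f e \<noteq> 0 \<longrightarrow> f e' \<noteq> 0 \<longrightarrow> tgt e = tgt e' \<longrightarrow> e = e') \<and> sum f E = 1}"
proof -
  have "{f. (\<forall>e. 0 \<le> f e) \<and> {e. f e \<noteq> 0} \<in> DT E src tgt \<and> finite {e. f e \<noteq> 0} \<and> sum f {e. f e \<noteq> 0} = 1}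
    = {f. (\<forall>e. 0 \<le> f e) \<and> (\<forall>e. e \<notin> E \<longrightarrow> f e = 0) \<and>
     (\<forall>e\<in>E. \<forall>e'\<in>E. f e \<noteq> 0 \<longrightarrow> f e' \<noteq> 0 \<longrightarrow> tgt e = tgt e' \<longrightarrow> e = e') \<and> sum f E = 1}"
    (is "?L = ?R")
  proof (intro set_eqI iffI)
    fix f assume "f \<in> ?L"
    then have nn: "\<forall>e. 0 \<le> f e" and S: "{e. f e \<noteq> 0} \<in> DT E src tgt" and sm: "sum f {e. f e \<noteq> 0} = 1"
      by auto
    have sub: "{e. f e \<noteq> 0} \<subseteq> E" and cd: "\<And>v. card {e \<in> {e. f e \<noteq> 0}. tgt e = v} \<le> 1"
      using S unfolding DT_def directed_forest_def by auto
    have out: "\<forall>e. e \<notin> E \<longrightarrow> f e = 0" using sub by auto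
    have un: "\<forall>e\<in>E. \<forall>e'\<in>E. f e \<noteq> 0 \<longrightarrow> f e' \<noteq> 0 \<longrightarrow> tgt e = tgt e' \<longrightarrow> e = e'"
    proof (intro ballI impI)
      fix e e' assume "e \<in> E" "e' \<in> E" "f e \<noteq> 0" "f e' \<noteq> 0" "tgt e = tgt e'"
      moreover have fin: "finite {e'' \<in> {e. f e \<noteq> 0}. tgt e'' = tgt e}"
        by (rule finite_subset[OF _ finE]) (use sub in auto)
      moreover have "card {e'' \<in> {e. f e \<noteq> 0}. tgt e'' = tgt e} \<le> Suc 0" using cd[of "tgt e"] by simp
      ultimately have "\<forall>a1 \<in> {e'' \<in> {e. f e \<noteq> 0}. tgt e'' = tgt e}. \<forall>a2 \<in> {e'' \<in> {e. f e \<noteq> 0}. tgt e'' = tgt e}. a1 = a2"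
        using card_le_Suc0_iff_eq[OF fin] by blast
      then show "e = e'" using \<open>f e \<noteq> 0\<close> \<open>f e' \<noteq> 0\<close> \<open>tgt e = tgt e'\<close> by auto
    qed
    have "sum f {e. f e \<noteq> 0} = sum f E" using sub finE by (intro sum.mono_neutral_left) auto
    then show "f \<in> ?R" using nn out un sm by simp
  next
    fix f assume "f \<in> ?R"
    then have nn: "\<forall>e. 0 \<le> f e" and out: "\<forall>e. e \<notin> E \<longrightarrow> f e = 0"
      and un: "\<forall>e\<in>E. \<forall>e'\<in>E. f e \<noteq> 0 \<longrightarrow> f e' \<noteq> 0 \<longrightarrow> tgt e = tgt e' \<longrightarrow> e = e'"
      and sm: "sum f E = 1" by auto
    have sub: "{e. f e \<noteq> 0} \<subseteq> E" using out by auto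
    have fin: "finite {e. f e \<noteq> 0}" using finite_subset[OF sub finE] .
    have "edge_rel src tgt {e. f e \<noteq> 0} \<subseteq> edge_rel src tgt E" using sub unfolding edge_rel_def by auto
    then have acs: "acyclic (edge_rel src tgt {e. f e \<noteq> 0})" using ac acyclic_subset by blast
    have cd: "card {e \<in> {e. f e \<noteq> 0}. tgt e = v} \<le> 1" for v
    proof -
      have "finite {e \<in> {e. f e \<noteq> 0}. tgt e = v}" using fin by simp
      moreover have "\<forall>a1 \<in> {e \<in> {e. f e \<noteq> 0}. tgt e = v}. \<forall>a2 \<in> {e \<in> {e. f e \<noteq> 0}. tgt e = v}. a1 = a2"
        using un sub by blast
      ultimately have "card {e \<in> {e. f e \<noteq> 0}. tgt e = v} \<le> Suc 0" using card_le_Suc0_iff_eq by blast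
      then show ?thesis by simp
    qed
    have "{e. f e \<noteq> 0} \<in> DT E src tgt" unfolding DT_def directed_forest_def using sub acs cd by simp
    moreover have "sum f {e. f e \<noteq> 0} = sum f E" using sub finE by (intro sum.mono_neutral_left) auto
    ultimately show "f \<in> ?L" using nn fin sm by simp
  qed
  then show ?thesis unfolding geom_realization_def by (rule arg_cong)
qed

theorem theorem2p12:
  fixes V :: "'v set" and E :: "'e set" and src tgt :: "'e \<Rightarrow> 'v"
  assumes "finite_dag V E src tgt"
  defines "R \<equiv> {v \<in> V. indeg E tgt v = 0}"
  shows "geom_realization (DT E src tgt) homotopy_equivalent_space
           wedge_spheres (\<Prod>v\<in>V - R. indeg E tgt v - 1) (int (card V) - int (card R) - 1)"
proof -
  have finV: "finite V" and finE: "finite E" and inV: "\<And>e. e \<in> E \<Longrightarrow> src e \<in> V \<and> tgt e \<in> V"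
    and ac: "acyclic (edge_rel src tgt E)" using assms(1) unfolding finite_dag_def by auto
  define U where "U = V - R"
  define Xs where "Xs = {f. (\<forall>e. 0 \<le> f e) \<and> (\<forall>e. e \<notin> E \<longrightarrow> f e = (0::real)) \<and>
     (\<forall>e\<in>E. \<forall>e'\<in>E. f e \<noteq> 0 \<longrightarrow> f e' \<noteq> 0 \<longrightarrow> tgt e = tgt e' \<longrightarrow> e = e') \<and> sum f E = 1}"
  have G: "geom_realization (DT E src tgt) = subtopology PT Xs"
    unfolding Xs_def by (rule geom_eq[OF finE ac])
  have Dne: "{e \<in> E. tgt e = v} \<noteq> {}" if "v \<in> U" for v
  proof
    assume h: "{e \<in> E. tgt e = v} = {}"
    have "indeg E tgt v = 0" unfolding indeg_def h by simp
    then show False using that unfolding U_def R_def by simp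
  qed
  have tgtU: "tgt e \<in> U" if "e \<in> E" for e
  proof -
    have "{e' \<in> E. tgt e' = tgt e} \<noteq> {}" using that by blast
    moreover have "finite {e' \<in> E. tgt e' = tgt e}" using finE by simp
    ultimately have "indeg E tgt (tgt e) \<noteq> 0" unfolding indeg_def by simp
    then show ?thesis unfolding U_def R_def using inV[OF that] by simp
  qed
  have finU: "finite U" unfolding U_def using finV by simp
  have cardVR: "int (card V) - int (card R) = int (card U)"
  proof -
    have "R \<subseteq> V" unfolding R_def by auto
    then have "card U = card V - card R" "card R \<le> card V" unfolding U_def using finV
      by (simp_all add: card_Diff_subset card_mono finite_subset)
    then show ?thesis by simp
  qed
  show ?thesis
  proof (cases "U = {}")
    case True
    then have E0: "E = {}" using tgtU by blast
    have "Xs = {}" unfolding Xs_def E0 by simp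
    moreover have "wedge_spheres_set (\<Prod>v\<in>V - R. indeg E tgt v - 1) (int (card V) - int (card R) - 1) = {}"
    proof -
      have VR: "V - R = {}" using True unfolding U_def .
      have "int (card V) - int (card R) = 0" using cardVR True by simp
      then show ?thesis unfolding wedge_spheres_set_def VR by simp
    qed
    ultimately show ?thesis unfolding G wedge_spheres_def
      by (simp add: homeomorphic_imp_homotopy_equivalent_space homeomorphic_empty_space_eq)
  next
    case False
    then obtain v0 where v0: "v0 \<in> U" by blast
    define a where "a v = (SOME e. e \<in> E \<and> tgt e = v)" for v
    have aE: "a v \<in> E \<and> tgt (a v) = v" if "v \<in> U" for v
    proof -
      have "\<exists>e. e \<in> E \<and> tgt e = v" using Dne[OF that] by blast
      then show ?thesis unfolding a_def by (rule someI_ex)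
    qed
    define B where "B = PiE U (\<lambda>v. {e\<in>E. tgt e = v} - {a v})"
    have finB: "finite B" unfolding B_def using finU finE by (intro finite_PiE) auto
    have cardB: "card B = (\<Prod>v\<in>V - R. indeg E tgt v - 1)"
    proof -
      have "card B = (\<Prod>v\<in>U. card ({e\<in>E. tgt e = v} - {a v}))" unfolding B_def using finU by (rule card_PiE)
      also have "\<dots> = (\<Prod>v\<in>U. indeg E tgt v - 1)"
      proof (rule prod.cong)
        fix v assume v: "v \<in> U"
        have "a v \<in> {e\<in>E. tgt e = v}" using aE[OF v] by simp
        then show "card ({e\<in>E. tgt e = v} - {a v}) = indeg E tgt v - 1"
          unfolding indeg_def by (simp add: card_Diff_singleton)
      qed simp
      finally show ?thesis unfolding U_def .
    qed
    obtain bj where bj: "bij_betw bj {0..<card B} B" using ex_bij_betw_nat_finite[OF finB] by blast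
    obtain g where g: "bij_betw g (U - {v0}) {0..<card (U - {v0})}"
      using ex_bij_betw_finite_nat[of "U - {v0}"] finU by blast
    define pos where "pos v = (if v = v0 then 0 else Suc (g v))" for v
    have cU: "card (U - {v0}) = card U - 1" using v0 by (simp add: card_Diff_singleton)
    have "card U > 0" using finU v0 by (auto simp: card_gt_0_iff)
    then have cU1: "card U \<ge> 1" by simp
    have pos_bij: "bij_betw pos U {0..<card U}"
      unfolding bij_betw_def
    proof
      show "inj_on pos U"
      proof (rule inj_onI)
        fix x y assume x: "x \<in> U" and y: "y \<in> U" and e: "pos x = pos y"
        show "x = y"
        proof (cases "x = v0")
          case True then show ?thesis using e unfolding pos_def by (cases "y = v0") simp_all
        next
          case False
          then have "y \<noteq> v0" using e unfolding pos_def by (cases "y = v0") simp_all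
          then have "g x = g y" using e False unfolding pos_def by simp
          then show ?thesis using g x y False \<open>y \<noteq> v0\<close> unfolding bij_betw_def inj_on_def by blast
        qed
      qed
      show "pos ` U = {0..<card U}"
      proof (intro set_eqI iffI)
        fix p assume "p \<in> pos ` U"
        then obtain v where v: "v \<in> U" "p = pos v" by blast
        show "p \<in> {0..<card U}"
        proof (cases "v = v0")
          case True then show ?thesis using v cU1 unfolding pos_def by simp
        next
          case False
          then have "g v < card U - 1" using g v cU unfolding bij_betw_def by auto
          then show ?thesis using v False unfolding pos_def by simp
        qed
      next
        fix p assume p: "p \<in> {0..<card U}"
        show "p \<in> pos ` U"
        proof (cases p)
          case 0 then show ?thesis using v0 unfolding pos_def by (intro image_eqI[of _ _ v0]) simp_all
        next
          case (Suc q)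
          then have "q \<in> {0..<card (U - {v0})}" using p cU by simp
          then have "q \<in> g ` (U - {v0})" using g unfolding bij_betw_def by simp
          then obtain w where w: "w \<in> U - {v0}" "g w = q" by blast
          then show ?thesis using Suc unfolding pos_def by (intro image_eqI[of _ _ w]) simp_all
        qed
      qed
    qed
    have pos_v0: "pos v0 = 0" unfolding pos_def by simp
    interpret D: dts U v0 E tgt a "card B" bj pos
    proof
      show "finite U" by (rule finU)
      show "v0 \<in> U" by (rule v0)
      show "finite E" by (rule finE)
      show "\<And>e. e \<in> E \<Longrightarrow> tgt e \<in> U" by (rule tgtU)
      show "\<And>v. v \<in> U \<Longrightarrow> a v \<in> E" using aE by blast
      show "\<And>v. v \<in> U \<Longrightarrow> tgt (a v) = v" using aE by blast
      show "bij_betw bj {0..<card B} (PiE U (\<lambda>v. {e\<in>E. tgt e = v} - {a v}))" using bj unfolding B_def .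
      show "bij_betw pos U {0..<card U}" by (rule pos_bij)
      show "pos v0 = 0" by (rule pos_v0)
    qed
    have X: "Xs = D.Xset" unfolding Xs_def D.Xset_def ..
    have W: "wedge_spheres (\<Prod>v\<in>V - R. indeg E tgt v - 1) (int (card V) - int (card R) - 1) = subtopology PT D.Wset"
      unfolding wedge_spheres_def D.Wset_def D.KK_def cardB[symmetric] cardVR ..
    show ?thesis unfolding G W X by (rule D.X_heq_W)
  qed
qed


end
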